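(* Let $d\ge2$ and $f=\frac1n\sum_{i=1}^n f_i$, where each $f_i:\mathbb{R}^d\to\mathbb{R}$ is twice differentiable with $L$-Lipschitz Hessian. Let $\mathcal{B}$ be a multiset of $b$ indices drawn i.i.d. uniformly (with replacement) from $\{1,\dots,n\}$ and $h_{\mathcal{B}}:=\frac1b\sum_{i\in\mathcal{B}}f_i$. Then for all $x,\tilde x\in\mathbb{R}^d$, $$ \mathbb{E}_{\mathcal{B}}\|\mathcal{G}(h_{\mathcal{B}},x,\tilde x)-\nabla f(x)\|^{3/2}\le\Bigl(\frac{L}{\sqrt b}\Bigr)^{3/2}\|x-\tilde x\|^3,\qquad \mathbb{E}_{\mathcal{B}}\|\mathcal{H}(h_{\mathcal{B}},x,\tilde x)-\nabla^2 f(x)\|^{3}\le C\Bigl(\frac{\sqrt{\log d}\,L}{\sqrt b}\Bigr)^{3}\|x-\tilde x\|^3, $$ with $C$ an absolute numerical constant; i.e. $h_{\mathcal{B}}$ satisfies the Lipschitz similarity condition with $\delta_1=L/\sqrt b$ and $\delta_2=\mathcal{O}(\sqrt{\log d}\,L/\sqrt b)$.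
   Context: $\|\cdot\|$ is the Euclidean norm on vectors and the spectral norm on symmetric matrices. For twice differentiable $h$ and $x,\tilde x\in\mathbb{R}^d$ define $\mathcal{G}(h,x,\tilde x):=\nabla h(x)-\nabla h(\tilde x)+\nabla f(\tilde x)+(\nabla^2 f(\tilde x)-\nabla^2 h(\tilde x))(x-\tilde x)$ and $\mathcal{H}(h,x,\tilde x):=\nabla^2 h(x)-\nabla^2 h(\tilde x)+\nabla^2 f(\tilde x)$. A (random) helper pair $h_1,h_2$ satisfies the Lipschitz similarity condition with $\delta_1,\delta_2\ge0$ if for all $x,\tilde x$: $\mathbb{E}\|\mathcal{G}(h_1,x,\tilde x)-\nabla f(x)\|^{3/2}\le\delta_1^{3/2}\|x-\tilde x\|^3$ and $\mathbb{E}\|\mathcal{H}(h_2,x,\tilde x)-\nabla^2 f(x)\|^3\le\delta_2^3\|x-\tilde x\|^3$. *)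

theory Defs
  imports "HOL-Analysis.Analysis" "HOL-Library.Function_Algebras"
begin

text \<open>Explicit-carrier model of R^d (d varies inside the statement, because the
constant C must be absolute, i.e. independent of d).  A vector of R^d is a
function nat => real whose coordinates j >= d vanish; a d x d matrix is a
function nat => nat => real of which only the entries i,j < d matter.\<close>

type_synonym vec = "nat \<Rightarrow> real"
type_synonym mat = "nat \<Rightarrow> nat \<Rightarrow> real"

definition Rd :: "nat \<Rightarrow> vec set" where
  "Rd d = {x. \<forall>j\<ge>d. x j = 0}"

definition vnorm :: "nat \<Rightarrow> vec \<Rightarrow> real" where
  "vnorm d x = sqrt (\<Sum>j<d. (x j)\<^sup>2)"

definition vinner :: "nat \<Rightarrow> vec \<Rightarrow> vec \<Rightarrow> real" where
  "vinner d x y = (\<Sum>j<d. x j * y j)"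

definition mv :: "nat \<Rightarrow> mat \<Rightarrow> vec \<Rightarrow> vec" where
  "mv d A v = (\<lambda>i. if i < d then (\<Sum>j<d. A i j * v j) else 0)"

definition specnorm :: "nat \<Rightarrow> mat \<Rightarrow> real" where
  "specnorm d A = Sup {vnorm d (mv d A v) | v. v \<in> Rd d \<and> vnorm d v \<le> 1}"

definition has_grad :: "nat \<Rightarrow> (vec \<Rightarrow> real) \<Rightarrow> vec \<Rightarrow> vec \<Rightarrow> bool" where
  "has_grad d f g x \<longleftrightarrow> (\<forall>e>0. \<exists>r>0. \<forall>h\<in>Rd d. vnorm d h < r \<longrightarrow>
      \<bar>f (x + h) - f x - vinner d g h\<bar> \<le> e * vnorm d h)"

definition has_jac :: "nat \<Rightarrow> (vec \<Rightarrow> vec) \<Rightarrow> mat \<Rightarrow> vec \<Rightarrow> bool" where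
  "has_jac d G H x \<longleftrightarrow> (\<forall>e>0. \<exists>r>0. \<forall>h\<in>Rd d. vnorm d h < r \<longrightarrow>
      vnorm d (G (x + h) - G x - mv d H h) \<le> e * vnorm d h)"

text \<open>Gradient and Hessian (unique in the coordinates < d whenever they exist).\<close>
definition grad :: "nat \<Rightarrow> (vec \<Rightarrow> real) \<Rightarrow> vec \<Rightarrow> vec" where
  "grad d f x = (\<lambda>j. if j < d then (SOME g. has_grad d f g x) j else 0)"

definition hess :: "nat \<Rightarrow> (vec \<Rightarrow> real) \<Rightarrow> vec \<Rightarrow> mat" where
  "hess d f x = (SOME H. has_jac d (grad d f) H x)"

definition twice_diff :: "nat \<Rightarrow> (vec \<Rightarrow> real) \<Rightarrow> bool" where
  "twice_diff d f \<longleftrightarrow> (\<forall>x\<in>Rd d. (\<exists>g. has_grad d f g x) \<and> (\<exists>H. has_jac d (grad d f) H x))"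

definition lipschitz_hess :: "nat \<Rightarrow> real \<Rightarrow> (vec \<Rightarrow> real) \<Rightarrow> bool" where
  "lipschitz_hess d L f \<longleftrightarrow>
     (\<forall>x\<in>Rd d. \<forall>y\<in>Rd d. specnorm d (hess d f x - hess d f y) \<le> L * vnorm d (x - y))"

definition calG :: "nat \<Rightarrow> (vec \<Rightarrow> real) \<Rightarrow> (vec \<Rightarrow> real) \<Rightarrow> vec \<Rightarrow> vec \<Rightarrow> vec" where
  "calG d f h x xt = grad d h x - grad d h xt + grad d f xt
      + mv d (hess d f xt - hess d h xt) (x - xt)"

definition calH :: "nat \<Rightarrow> (vec \<Rightarrow> real) \<Rightarrow> (vec \<Rightarrow> real) \<Rightarrow> vec \<Rightarrow> vec \<Rightarrow> mat" where
  "calH d f h x xt = hess d h x - hess d h xt + hess d f xt"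

text \<open>A batch of b i.i.d.
uniform indices from {0..<n} is a map B : {0..<b} -> {0..<n}; the expectation
over B is the uniform average over all n^b such maps.\<close>
definition favg :: "nat \<Rightarrow> (nat \<Rightarrow> vec \<Rightarrow> real) \<Rightarrow> vec \<Rightarrow> real" where
  "favg n fs = (\<lambda>x. (\<Sum>i<n. fs i x) / real n)"

definition batches :: "nat \<Rightarrow> nat \<Rightarrow> (nat \<Rightarrow> nat) set" where
  "batches n b = PiE {..<b} (\<lambda>_. {..<n})"

definition hB :: "nat \<Rightarrow> (nat \<Rightarrow> vec \<Rightarrow> real) \<Rightarrow> (nat \<Rightarrow> nat) \<Rightarrow> vec \<Rightarrow> real" where
  "hB b fs B = (\<lambda>x. (\<Sum>k<b. fs (B k) x) / real b)"

definition EB :: "nat \<Rightarrow> nat \<Rightarrow> ((nat \<Rightarrow> nat) \<Rightarrow> real) \<Rightarrow> real" where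
  "EB n b Z = (\<Sum>B\<in>batches n b. Z B) / real n ^ b"

end

theory Submission
  imports Defs
begin

lemma vnorm_L2: "vnorm d x = L2_set x {..<d}"
  unfolding vnorm_def L2_set_def by simp

lemma vnorm_nonneg[simp]: "0 \<le> vnorm d x"
  unfolding vnorm_def by (simp add: sum_nonneg)

lemma vnorm_sq: "(vnorm d x)^2 = (\<Sum>j<d. (x j)^2)"
  unfolding vnorm_def by (simp add: sum_nonneg)

lemma vnorm_cong: "(\<And>j. j < d \<Longrightarrow> x j = y j) \<Longrightarrow> vnorm d x = vnorm d y"
  unfolding vnorm_def by simp

lemma vnorm_triangle: "vnorm d (x + y) \<le> vnorm d x + vnorm d y"
  unfolding vnorm_L2 plus_fun_def by (rule L2_set_triangle_ineq)

lemma vnorm_scale: "vnorm d (\<lambda>j. c * x j) = \<bar>c\<bar> * vnorm d x"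
  unfolding vnorm_def by (simp add: power_mult_distrib sum_distrib_left[symmetric] real_sqrt_mult)

lemma vnorm_uminus: "vnorm d (- x) = vnorm d x"
  unfolding vnorm_def by simp

lemma vnorm_diff_sym: "vnorm d (x - y) = vnorm d (y - x)"
  unfolding vnorm_def by (simp add: power2_commute)

lemma vnorm_triangle_diff: "vnorm d (x - y) \<le> vnorm d x + vnorm d y"
proof -
  have "x - y = x + (- y)" by simp
  then show ?thesis using vnorm_triangle[of d x "- y"] vnorm_uminus[of d y] by simp
qed

lemma vnorm_zero_iff: "vnorm d x = 0 \<longleftrightarrow> (\<forall>j<d. x j = 0)"
  unfolding vnorm_L2 by (auto simp: L2_set_eq_0_iff)

lemma vinner_cs: "\<bar>vinner d x y\<bar> \<le> vnorm d x * vnorm d y"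
proof -
  have "\<bar>vinner d x y\<bar> \<le> (\<Sum>j<d. \<bar>x j\<bar> * \<bar>y j\<bar>)"
    unfolding vinner_def by (rule order_trans[OF sum_abs]) (simp add: abs_mult)
  also have "\<dots> \<le> vnorm d x * vnorm d y" unfolding vnorm_L2 by (rule L2_set_mult_ineq)
  finally show ?thesis .
qed

lemma vinner_self: "vinner d x x = (vnorm d x)^2"
  unfolding vinner_def vnorm_sq by (simp add: power2_eq_square)

lemma coord_le_vnorm: "j < d \<Longrightarrow> \<bar>x j\<bar> \<le> vnorm d x"
  unfolding vnorm_def by (rule real_le_rsqrt) (auto intro: member_le_sum)



definition mmul :: "nat \<Rightarrow> mat \<Rightarrow> mat \<Rightarrow> mat" where
  "mmul d A B = (\<lambda>i j. if i < d \<and> j < d then (\<Sum>k<d. A i k * B k j) else 0)"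
definition mid :: "nat \<Rightarrow> mat" where
  "mid d = (\<lambda>i j. if i < d \<and> j < d \<and> i = j then 1 else 0)"
definition mT :: "mat \<Rightarrow> mat" where
  "mT A = (\<lambda>i j. A j i)"
lemma mT_mT[simp]: "mT (mT A) = A" unfolding mT_def by simp
definition mtr :: "nat \<Rightarrow> mat \<Rightarrow> real" where
  "mtr d A = (\<Sum>i<d. A i i)"
definition frob :: "nat \<Rightarrow> mat \<Rightarrow> real" where
  "frob d A = (\<Sum>i<d. \<Sum>j<d. (A i j)^2)"
definition meq :: "nat \<Rightarrow> mat \<Rightarrow> mat \<Rightarrow> bool" where
  "meq d A B \<longleftrightarrow> (\<forall>i<d. \<forall>j<d. A i j = B i j)"

lemma mv_cong: "meq d A B \<Longrightarrow> (\<And>j. j < d \<Longrightarrow> v j = w j) \<Longrightarrow> mv d A v = mv d B w"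
  unfolding mv_def meq_def by (auto intro!: sum.cong)

lemma mv_bound: "vnorm d (mv d A v) \<le> sqrt (frob d A) * vnorm d v"
proof -
  have "(vnorm d (mv d A v))^2 = (\<Sum>i<d. (\<Sum>j<d. A i j * v j)^2)"
    unfolding vnorm_sq mv_def by simp
  also have "\<dots> \<le> (\<Sum>i<d. (\<Sum>j<d. (A i j)^2) * (\<Sum>j<d. (v j)^2))"
    by (rule sum_mono) (rule Cauchy_Schwarz_ineq_sum)
  also have "\<dots> = (sqrt (frob d A) * vnorm d v)^2"
    unfolding frob_def vnorm_sq power_mult_distrib
    by (simp add: sum_distrib_right sum_nonneg)
  finally show ?thesis
    by (rule power2_le_imp_le) (simp add: frob_def sum_nonneg)
qed

lemma specnorm_bdd: "bdd_above {vnorm d (mv d A v) | v. v \<in> Rd d \<and> vnorm d v \<le> 1}"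
proof (rule bdd_aboveI)
  fix y assume "y \<in> {vnorm d (mv d A v) | v. v \<in> Rd d \<and> vnorm d v \<le> 1}"
  then obtain v where "y = vnorm d (mv d A v)" "vnorm d v \<le> 1" by auto
  moreover have "sqrt (frob d A) * vnorm d v \<le> sqrt (frob d A)"
    using \<open>vnorm d v \<le> 1\<close> by (simp add: mult_left_le frob_def sum_nonneg)
  ultimately show "y \<le> sqrt (frob d A)" using mv_bound[of d A v] by linarith
qed

lemma zero_in_Rd[simp]: "(\<lambda>_. 0) \<in> Rd d" unfolding Rd_def by simp

lemma mv_zero_vec: "mv d A (\<lambda>_. 0) = (\<lambda>_. 0)" unfolding mv_def by auto

lemma specnorm_nonneg[simp]: "0 \<le> specnorm d A"
proof -
  have "vnorm d (mv d A (\<lambda>_. 0)) \<in> {vnorm d (mv d A v) | v. v \<in> Rd d \<and> vnorm d v \<le> 1}"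
    by (force simp: vnorm_def)
  then have "vnorm d (mv d A (\<lambda>_. 0)) \<le> specnorm d A"
    unfolding specnorm_def by (rule cSup_upper[OF _ specnorm_bdd])
  then show ?thesis using vnorm_nonneg order_trans by blast
qed

definition mask :: "nat \<Rightarrow> vec \<Rightarrow> vec" where "mask d v = (\<lambda>j. if j < d then v j else 0)"

lemma mask_Rd: "mask d v \<in> Rd d" unfolding mask_def Rd_def by auto
lemma mv_mask: "mv d A (mask d v) = mv d A v" unfolding mv_def mask_def by auto
lemma vnorm_mask: "vnorm d (mask d v) = vnorm d v" unfolding vnorm_def mask_def by simp

lemma mv_le: "vnorm d (mv d A v) \<le> specnorm d A * vnorm d v"
proof (cases "vnorm d v = 0")
  case True
  then have "\<forall>j<d. v j = 0" by (simp add: vnorm_zero_iff)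
  then have "mv d A v = (\<lambda>_. 0)" unfolding mv_def by auto
  moreover have "vnorm d (\<lambda>_. 0) = 0" by (simp add: vnorm_def)
  ultimately show ?thesis by simp
next
  case False
  let ?c = "vnorm d v"
  have cpos: "?c > 0" using False vnorm_nonneg[of d v] by linarith
  define u where "u = (\<lambda>j. (1 / ?c) * mask d v j)"
  have uR: "u \<in> Rd d" using mask_Rd[of d v] unfolding u_def Rd_def by auto
  have un: "vnorm d u = 1" unfolding u_def vnorm_scale vnorm_mask using cpos by simp
  have "vnorm d (mv d A u) \<le> specnorm d A" unfolding specnorm_def
    by (rule cSup_upper[OF _ specnorm_bdd]) (use uR un in auto)
  moreover have "mv d A u = (\<lambda>i. (1 / ?c) * mv d A v i)"
    unfolding u_def mv_def mask_def by (auto simp: sum_divide_distrib intro!: ext sum.cong)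
  then have "vnorm d (mv d A u) = (1 / ?c) * vnorm d (mv d A v)"
    using vnorm_scale[of d "1 / ?c" "mv d A v"] cpos by simp
  ultimately have "(1/?c) * vnorm d (mv d A v) \<le> specnorm d A" by simp
  then show ?thesis using cpos by (simp add: field_simps)
qed

lemma specnorm_le:
  assumes "0 \<le> c" "\<And>v. v \<in> Rd d \<Longrightarrow> vnorm d (mv d A v) \<le> c * vnorm d v"
  shows "specnorm d A \<le> c"
  unfolding specnorm_def
proof (rule cSup_least)
  have "vnorm d (\<lambda>_. 0) = 0" by (simp add: vnorm_def)
  then have "vnorm d (mv d A (\<lambda>_. 0)) \<in> {vnorm d (mv d A v) |v. v \<in> Rd d \<and> vnorm d v \<le> 1}"
    using zero_in_Rd[of d] by (intro CollectI exI[of _ "\<lambda>_. 0"]) simp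
  then show "{vnorm d (mv d A v) |v. v \<in> Rd d \<and> vnorm d v \<le> 1} \<noteq> {}" by blast
  fix y assume "y \<in> {vnorm d (mv d A v) |v. v \<in> Rd d \<and> vnorm d v \<le> 1}"
  then obtain v where v: "y = vnorm d (mv d A v)" "v \<in> Rd d" "vnorm d v \<le> 1" by auto
  have "c * vnorm d v \<le> c" using v(3) assms(1) by (simp add: mult_left_le)
  then show "y \<le> c" using assms(2)[OF v(2)] v(1) by linarith
qed

lemma specnorm_cong: "meq d A B \<Longrightarrow> specnorm d A = specnorm d B"
  unfolding specnorm_def using mv_cong[of d A B] by metis

lemma mv_add: "mv d (A + B) v = mv d A v + mv d B v"
  unfolding mv_def by (auto simp: sum.distrib algebra_simps)
lemma mv_diff: "mv d (A - B) v = mv d A v - mv d B v"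
  unfolding mv_def by (auto simp: sum_subtractf algebra_simps)

lemma specnorm_triangle: "specnorm d (A + B) \<le> specnorm d A + specnorm d B"
  apply (rule specnorm_le, simp add: add_nonneg_nonneg)
  unfolding mv_add
  by (rule order_trans[OF vnorm_triangle]) (simp add: mv_le distrib_right add_mono)

lemma specnorm_diff: "specnorm d (A - B) \<le> specnorm d A + specnorm d B"
  apply (rule specnorm_le, simp add: add_nonneg_nonneg)
  unfolding mv_diff
  by (rule order_trans[OF vnorm_triangle_diff]) (simp add: mv_le distrib_right add_mono)

lemma specnorm_scale: "specnorm d (\<lambda>i j. c * A i j) = \<bar>c\<bar> * specnorm d A"
proof -
  have mvs: "mv d (\<lambda>i j. c * A i j) v = (\<lambda>i. c * mv d A v i)" for c A v
    unfolding mv_def by (auto simp: sum_distrib_left ac_simps)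
  have le: "specnorm d (\<lambda>i j. c * A i j) \<le> \<bar>c\<bar> * specnorm d A" for c A
    apply (rule specnorm_le, simp)
    unfolding mvs vnorm_scale mult.assoc by (rule mult_left_mono[OF mv_le]) simp
  show ?thesis
  proof (cases "c = 0")
    case True
    have "specnorm d (\<lambda>i j. 0 * A i j) \<le> 0" using le[of 0 A] by simp
    moreover have "0 \<le> specnorm d (\<lambda>i j. 0 * A i j)" by (rule specnorm_nonneg)
    ultimately have "specnorm d (\<lambda>i j. 0 * A i j) = 0" by linarith
    then show ?thesis using True by simp
  next
    case False
    have "specnorm d A \<le> \<bar>1/c\<bar> * specnorm d (\<lambda>i j. c * A i j)"
      using le[of "1/c" "\<lambda>i j. c * A i j"] False by simp
    then have "\<bar>c\<bar> * specnorm d A \<le> specnorm d (\<lambda>i j. c * A i j)"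
      using False by (simp add: field_simps abs_divide)
    then show ?thesis using le[of c A] by linarith
  qed
qed

lemma specnorm_zero: "meq d A (\<lambda>_ _. 0) \<Longrightarrow> specnorm d A = 0"
proof -
  assume "meq d A (\<lambda>_ _. 0)"
  then have "specnorm d A = specnorm d (\<lambda>i j. 0 * A i j)" by (intro specnorm_cong) (simp add: meq_def)
  also have "\<dots> = 0" using specnorm_scale[of d 0 A] by simp
  finally show ?thesis .
qed

lemma mv_mmul: "mv d (mmul d A B) v = mv d A (mv d B v)"
proof -
  have *: "(\<Sum>k<d. (\<Sum>l<d. A i l * B l k) * v k) = (\<Sum>l<d. A i l * (\<Sum>k<d. B l k * v k))" for i
    by (simp add: sum_distrib_left sum_distrib_right mult.assoc) (rule sum.swap)
  show ?thesis unfolding mv_def mmul_def using * by (auto intro!: ext sum.cong)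
qed

lemma specnorm_mmul: "specnorm d (mmul d A B) \<le> specnorm d A * specnorm d B"
  apply (rule specnorm_le, simp)
  unfolding mv_mmul
  apply (rule order_trans[OF mv_le])
  by (simp add: mv_le mult.assoc mult_left_mono)

lemma vinner_mv_T: "vinner d u (mv d A v) = vinner d (mv d (mT A) u) v"
proof -
  have "(\<Sum>i<d. u i * (\<Sum>j<d. A i j * v j)) = (\<Sum>j<d. (\<Sum>i<d. A i j * u i) * v j)"
    by (simp add: sum_distrib_left sum_distrib_right ac_simps) (rule sum.swap)
  then show ?thesis unfolding vinner_def mv_def mT_def by simp
qed

lemma specnorm_T_le: "specnorm d (mT A) \<le> specnorm d A"
proof (rule specnorm_le, simp)
  fix u :: vec
  let ?w = "mv d (mT A) u"
  have "(vnorm d ?w)^2 = vinner d ?w ?w" by (simp add: vinner_self)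
  also have "\<dots> = vinner d (mv d A ?w) u"
    using vinner_mv_T[of d ?w "mT A" u] by (simp only: mT_mT)
  also have "\<dots> \<le> vnorm d (mv d A ?w) * vnorm d u" using vinner_cs by (rule abs_le_D1)
  also have "\<dots> \<le> specnorm d A * vnorm d ?w * vnorm d u" by (simp add: mv_le mult_right_mono)
  finally have *: "(vnorm d ?w)^2 \<le> specnorm d A * vnorm d u * vnorm d ?w" by (simp add: ac_simps)
  show "vnorm d ?w \<le> specnorm d A * vnorm d u"
  proof (cases "vnorm d ?w = 0")
    case True then show ?thesis by simp
  next
    case False
    then have "vnorm d ?w > 0" using vnorm_nonneg[of d ?w] by linarith
    then show ?thesis using * by (simp add: power2_eq_square)
  qed
qed


lemma specnorm_T: "specnorm d (mT A) = specnorm d A"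
  using specnorm_T_le[of d A] specnorm_T_le[of d "mT A"] by simp

lemma specnorm_cstar: "specnorm d (mmul d (mT A) A) = (specnorm d A)^2"
proof (rule antisym)
  show "specnorm d (mmul d (mT A) A) \<le> (specnorm d A)^2"
    using specnorm_mmul[of d "mT A" A] by (simp add: specnorm_T power2_eq_square)
  show "(specnorm d A)^2 \<le> specnorm d (mmul d (mT A) A)"
  proof -
    have "specnorm d A \<le> sqrt (specnorm d (mmul d (mT A) A))"
    proof (rule specnorm_le, simp)
      fix v :: vec
      have "(vnorm d (mv d A v))^2 = vinner d (mv d A v) (mv d A v)" by (simp add: vinner_self)
      also have "\<dots> = vinner d (mv d (mmul d (mT A) A) v) v"
        by (simp add: vinner_mv_T mv_mmul)
      also have "\<dots> \<le> vnorm d (mv d (mmul d (mT A) A) v) * vnorm d v" using vinner_cs by (rule abs_le_D1)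
      also have "\<dots> \<le> specnorm d (mmul d (mT A) A) * vnorm d v * vnorm d v" by (simp add: mv_le mult_right_mono)
      also have "\<dots> = (sqrt (specnorm d (mmul d (mT A) A)) * vnorm d v)^2"
        by (simp add: power_mult_distrib power2_eq_square)
      finally show "vnorm d (mv d A v) \<le> sqrt (specnorm d (mmul d (mT A) A)) * vnorm d v"
        by (rule power2_le_imp_le) simp
    qed
    then have "(specnorm d A)^2 \<le> (sqrt (specnorm d (mmul d (mT A) A)))^2"
      by (rule power_mono) simp
    then show ?thesis by simp
  qed
qed

lemma specnorm_frob: "(specnorm d A)^2 \<le> frob d A"
proof -
  have "specnorm d A \<le> sqrt (frob d A)"
    apply (rule specnorm_le) apply (simp add: frob_def sum_nonneg) by (rule mv_bound)
  then have "(specnorm d A)^2 \<le> (sqrt (frob d A))^2" by (rule power_mono) simp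
  then show ?thesis by (simp add: frob_def sum_nonneg)
qed

lemma mtr_bound: "\<bar>mtr d A\<bar> \<le> real d * specnorm d A"
proof -
  have "\<bar>A i i\<bar> \<le> specnorm d A" if "i < d" for i
  proof -
    let ?e = "\<lambda>j. if j = i then 1 else 0 :: real"
    have "mv d A ?e i = A i i" unfolding mv_def using that by (simp add: if_distrib cong: if_cong)
    then have "\<bar>A i i\<bar> \<le> vnorm d (mv d A ?e)" using coord_le_vnorm[OF that, of "mv d A ?e"] by simp
    also have "\<dots> \<le> specnorm d A * vnorm d ?e" by (rule mv_le)
    also have "vnorm d ?e = 1" unfolding vnorm_def using that
      by (subst sum.cong[OF refl, of _ _ "\<lambda>j. if j = i then 1 else 0"]) auto
    finally show ?thesis by simp
  qed
  then have "\<bar>mtr d A\<bar> \<le> (\<Sum>i<d. specnorm d A)"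
    unfolding mtr_def by (intro order_trans[OF sum_abs] sum_mono) auto
  then show ?thesis by simp
qed

lemma sum_fun_apply: "(sum G C) x = (\<Sum>c\<in>C. G c x)"
  by (induction C rule: infinite_finite_induct) auto

lemma msum_apply: "(sum G C :: mat) i j = (\<Sum>c\<in>C. G c i j)"
  by (simp add: sum_fun_apply)

lemma mmul_sum_left: "mmul d (\<Sum>c\<in>C. G c) B = (\<Sum>c\<in>C. mmul d (G c) B)"
  unfolding mmul_def
  by (rule ext, rule ext) (auto simp: msum_apply sum_distrib_right intro: sum.swap)

lemma mmul_sum_right: "mmul d A (\<Sum>c\<in>C. G c) = (\<Sum>c\<in>C. mmul d A (G c))"
  unfolding mmul_def
  by (rule ext, rule ext) (auto simp: msum_apply sum_distrib_left intro: sum.swap)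

lemma mmul_add_left: "mmul d (A + A') B = mmul d A B + mmul d A' B"
  unfolding mmul_def by (auto intro!: ext simp: sum.distrib algebra_simps)

lemma mmul_cong: "meq d A A' \<Longrightarrow> meq d B B' \<Longrightarrow> mmul d A B = mmul d A' B'"
  unfolding mmul_def meq_def by (auto intro!: ext sum.cong)

lemma mmul_assoc: "mmul d (mmul d A B) C = mmul d A (mmul d B C)"
proof (rule ext, rule ext)
  fix i j
  have *: "(\<Sum>k<d. (\<Sum>l<d. A i l * B l k) * C k j) = (\<Sum>l<d. A i l * (\<Sum>k<d. B l k * C k j))"
    by (simp add: sum_distrib_left sum_distrib_right mult.assoc) (rule sum.swap)
  show "mmul d (mmul d A B) C i j = mmul d A (mmul d B C) i j"
    unfolding mmul_def using * by (auto intro!: sum.cong)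
qed

lemma mT_mmul: "mT (mmul d A B) = mmul d (mT B) (mT A)"
  unfolding mT_def mmul_def by (auto intro!: ext sum.cong simp: mult.commute)

lemma mT_add: "mT (A + B) = mT A + mT B" unfolding mT_def by (simp add: fun_eq_iff)

lemma mmul_add_right: "mmul d A (B + B') = mmul d A B + mmul d A B'"
  unfolding mmul_def by (auto intro!: ext simp: sum.distrib algebra_simps)

lemma meq_sym: "meq d A B \<Longrightarrow> meq d B A" unfolding meq_def by auto

lemma meq_mid_left: "meq d (mmul d (mid d) A) A"
proof -
  have "(\<Sum>k<d. mid d i k * A k j) = A i j" if "i < d" for i j
  proof -
    have "(\<Sum>k<d. mid d i k * A k j) = (\<Sum>k<d. if i = k then A k j else 0)"
      unfolding mid_def using that by (intro sum.cong) auto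
    then show ?thesis using that by (simp add: sum.delta)
  qed
  then show ?thesis unfolding meq_def mmul_def by auto
qed

lemma mT_sum: "mT (\<Sum>c\<in>C. G c) = (\<Sum>c\<in>C. mT (G c))"
  unfolding mT_def by (auto intro!: ext simp: msum_apply)

lemma mtr_sum: "mtr d (\<Sum>c\<in>C. G c) = (\<Sum>c\<in>C. mtr d (G c))"
  unfolding mtr_def by (simp add: msum_apply) (rule sum.swap)

lemma mtr_cong: "meq d A B \<Longrightarrow> mtr d A = mtr d B"
  unfolding mtr_def meq_def by auto

lemma mtr_frob: "mtr d (mmul d (mT A) A) = frob d A"
  unfolding mtr_def mmul_def mT_def frob_def by (simp add: power2_eq_square) (rule sum.swap)

definition masked :: "nat \<Rightarrow> mat \<Rightarrow> bool" where
  "masked d A \<longleftrightarrow> (\<forall>i j. \<not> (i < d \<and> j < d) \<longrightarrow> A i j = 0)"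

lemma masked_mmul: "masked d (mmul d A B)" unfolding masked_def mmul_def by auto
lemma masked_mid: "masked d (mid d)" unfolding masked_def mid_def by auto

lemma mmul_mid_right: "masked d A \<Longrightarrow> mmul d A (mid d) = A"
proof (rule ext, rule ext)
  fix i j assume m: "masked d A"
  show "mmul d A (mid d) i j = A i j"
  proof (cases "i < d \<and> j < d")
    case True
    then have "(\<Sum>k<d. A i k * mid d k j) = (\<Sum>k<d. if k = j then A i j else 0)"
      unfolding mid_def by (intro sum.cong) auto
    then show ?thesis using True unfolding mmul_def by simp
  next
    case False then show ?thesis using m unfolding mmul_def masked_def by auto
  qed
qed

lemma mmul_mid_left: "masked d A \<Longrightarrow> mmul d (mid d) A = A"
proof (rule ext, rule ext)
  fix i j assume m: "masked d A"
  show "mmul d (mid d) A i j = A i j"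
  proof (cases "i < d \<and> j < d")
    case True
    then have "(\<Sum>k<d. mid d i k * A k j) = (\<Sum>k<d. if k = i then A i j else 0)"
      unfolding mid_def by (intro sum.cong) auto
    then show ?thesis using True unfolding mmul_def by simp
  next
    case False then show ?thesis using m unfolding mmul_def masked_def by auto
  qed
qed

lemma meq_refl[simp]: "meq d A A" unfolding meq_def by simp

fun mprod :: "nat \<Rightarrow> nat \<Rightarrow> (nat \<Rightarrow> mat) \<Rightarrow> mat" where
  "mprod d 0 F = mid d"
| "mprod d (Suc L) F = mmul d (mprod d L F) (F L)"

lemma masked_mprod: "masked d (mprod d L F)"
  by (cases L) (simp_all add: masked_mid masked_mmul)

lemma mprod_cong: "(\<And>i. i < L \<Longrightarrow> meq d (F i) (G i)) \<Longrightarrow> mprod d L F = mprod d L G"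
  by (induction L) (auto intro!: mmul_cong)

lemma specnorm_mid: "specnorm d (mid d) \<le> 1"
proof (rule specnorm_le, simp)
  fix v :: vec
  have "mv d (mid d) v j = mask d v j" for j
  proof (cases "j < d")
    case True
    have "(\<Sum>k<d. mid d j k * v k) = (\<Sum>k<d. if j = k then v k else 0)"
      unfolding mid_def using True by (intro sum.cong) auto
    then show ?thesis using True unfolding mv_def mask_def by (simp add: sum.delta)
  next
    case False then show ?thesis unfolding mv_def mask_def by simp
  qed
  then have "mv d (mid d) v = mask d v" by (rule ext)
  then show "vnorm d (mv d (mid d) v) \<le> 1 * vnorm d v" by (simp add: vnorm_mask)
qed

lemma specnorm_mprod: "specnorm d (mprod d L F) \<le> (\<Prod>i<L. specnorm d (F i))"
proof (induction L)
  case 0 then show ?case by (simp add: specnorm_mid)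
next
  case (Suc L)
  have "specnorm d (mprod d (Suc L) F) \<le> specnorm d (mprod d L F) * specnorm d (F L)"
    by (simp add: specnorm_mmul)
  also have "\<dots> \<le> (\<Prod>i<L. specnorm d (F i)) * specnorm d (F L)"
    by (rule mult_right_mono[OF Suc]) simp
  finally show ?case by simp
qed

lemma mprod_expand:
  "mprod d L (\<lambda>i. if i \<in> A then F i + G i else F i)
   = (\<Sum>Q\<in>Pow (A \<inter> {..<L}). mprod d L (\<lambda>i. if i \<in> Q then G i else F i))"
proof (induction L)
  case 0 then show ?case by simp
next
  case (Suc L)
  let ?H = "\<lambda>Q i. if i \<in> Q then G i else F i"
  have cong: "mprod d L (\<lambda>i. if i = L \<or> i \<in> Q then G i else F i) = mprod d L (?H Q)" for Q
    by (rule mprod_cong) auto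
  show ?case
  proof (cases "L \<in> A")
    case True
    have P: "Pow (A \<inter> {..<Suc L}) = Pow (A \<inter> {..<L}) \<union> insert L ` Pow (A \<inter> {..<L})"
      using True by (auto simp: lessThan_Suc Pow_insert)
    have disj: "Pow (A \<inter> {..<L}) \<inter> insert L ` Pow (A \<inter> {..<L}) = {}" by auto
    have inj: "inj_on (insert L) (Pow (A \<inter> {..<L}))"
      by (rule inj_onI) (metis Int_iff Pow_iff insert_absorb insert_ident lessThan_iff less_irrefl subset_iff)
    have "mprod d (Suc L) (\<lambda>i. if i \<in> A then F i + G i else F i)
       = mmul d (\<Sum>Q\<in>Pow (A \<inter> {..<L}). mprod d L (?H Q)) (F L + G L)"
      using Suc True by simp
    also have "\<dots> = (\<Sum>Q\<in>Pow (A \<inter> {..<L}). mmul d (mprod d L (?H Q)) (F L))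
                 + (\<Sum>Q\<in>Pow (A \<inter> {..<L}). mmul d (mprod d L (?H Q)) (G L))"
      by (simp add: mmul_add_right mmul_sum_left)
    also have "(\<Sum>Q\<in>Pow (A \<inter> {..<L}). mmul d (mprod d L (?H Q)) (F L))
             = (\<Sum>Q\<in>Pow (A \<inter> {..<L}). mprod d (Suc L) (?H Q))"
      by (intro sum.cong) auto
    also have "(\<Sum>Q\<in>Pow (A \<inter> {..<L}). mmul d (mprod d L (?H Q)) (G L))
             = (\<Sum>Q\<in>insert L ` Pow (A \<inter> {..<L}). mprod d (Suc L) (?H Q))"
      by (subst sum.reindex[OF inj]) (auto intro!: sum.cong simp: cong)
    also have "(\<Sum>Q\<in>Pow (A \<inter> {..<L}). mprod d (Suc L) (?H Q)) + \<dots>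
       = (\<Sum>Q\<in>Pow (A \<inter> {..<Suc L}). mprod d (Suc L) (?H Q))"
      unfolding P by (rule sum.union_disjoint[symmetric]) (auto simp: disj)
    finally show ?thesis .
  next
    case False
    have P: "A \<inter> {..<Suc L} = A \<inter> {..<L}" using False by (auto simp: lessThan_Suc)
    have "mprod d (Suc L) (\<lambda>i. if i \<in> A then F i + G i else F i)
       = mmul d (\<Sum>Q\<in>Pow (A \<inter> {..<L}). mprod d L (?H Q)) (F L)"
      using Suc False by simp
    also have "\<dots> = (\<Sum>Q\<in>Pow (A \<inter> {..<L}). mprod d (Suc L) (?H Q))"
      by (simp add: mmul_sum_left) (intro sum.cong, auto)
    finally show ?thesis unfolding P .
  qed
qed

lemma mprod_lin:
  assumes "i < L"
  shows "(\<Sum>c\<in>C. mprod d L (F(i := G c))) = mprod d L (F(i := \<Sum>c\<in>C. G c))"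
  using assms
proof (induction L)
  case 0 then show ?case by simp
next
  case (Suc L)
  show ?case
  proof (cases "i = L")
    case True
    have eqs: "\<And>c. mprod d L (F(L := G c)) = mprod d L F" "mprod d L (F(L := \<Sum>c\<in>C. G c)) = mprod d L F"
      by (auto intro!: mprod_cong)
    show ?thesis unfolding True by (simp only: mprod.simps eqs fun_upd_same mmul_sum_right)
  next
    case False
    then have "i < L" using Suc by simp
    then show ?thesis using Suc False by (simp add: mmul_sum_left[symmetric])
  qed
qed

lemma mprod_zero_slot:
  assumes "i < L" "meq d (F i) (\<lambda>_ _. 0)"
  shows "mprod d L F = (\<lambda>_ _. 0)"
  using assms
proof (induction L)
  case 0 then show ?case by simp
next
  case (Suc L)
  show ?case
  proof (cases "i = L")
    case True
    then show ?thesis using Suc.prems unfolding meq_def by (auto intro!: ext simp: mmul_def)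
  next
    case False
    then show ?thesis using Suc by (auto intro!: ext simp: mmul_def)
  qed
qed

lemma mprod_append: "mprod d (a + b) F = mmul d (mprod d a F) (mprod d b (\<lambda>i. F (a + i)))"
proof (induction b)
  case 0 then show ?case by (simp add: mmul_mid_right masked_mprod)
next
  case (Suc b)
  then show ?case by (simp add: mmul_assoc)
qed

lemma mprod_T: "mT (mprod d L F) = mprod d L (\<lambda>i. mT (F (L - 1 - i)))"
proof (induction L arbitrary: F)
  case 0 then show ?case by (simp add: mid_def mT_def ext)
next
  case (Suc L)
  have "mT (mprod d (Suc L) F) = mmul d (mT (F L)) (mprod d L (\<lambda>i. mT (F (L - 1 - i))))"
    by (simp add: mT_mmul Suc)
  also have "\<dots> = mmul d (mprod d 1 (\<lambda>i. mT (F (Suc L - 1 - i)))) (mprod d L (\<lambda>i. mT (F (Suc L - 1 - (1 + i)))))"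
    by (rule mmul_cong) (auto simp: meq_sym[OF meq_mid_left])
  also have "\<dots> = mprod d (1 + L) (\<lambda>i. mT (F (Suc L - 1 - i)))"
    by (rule mprod_append[symmetric])
  finally show ?case by simp
qed

lemma batches_Suc_sum:
  "(\<Sum>B\<in>batches n (Suc b). F B) = (\<Sum>c<n. \<Sum>B\<in>batches n b. F (B(b := c)))"
proof -
  have eq: "batches n (Suc b) = (\<lambda>(y, g). g(b := y)) ` ({..<n} \<times> batches n b)"
    unfolding batches_def lessThan_Suc by (rule PiE_insert_eq)
  have inj: "inj_on (\<lambda>(y, g). g(b := y)) ({..<n} \<times> batches n b)"
  proof (rule inj_onI)
    fix p p' assume p: "p \<in> {..<n} \<times> batches n b" and p': "p' \<in> {..<n} \<times> batches n b"
      and e0: "(\<lambda>(y, g). g(b := y)) p = (\<lambda>(y, g). g(b := y)) p'"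
    obtain y g where pe: "p = (y, g)" by (cases p)
    obtain y' g' where pe': "p' = (y', g')" by (cases p')
    have g: "g \<in> PiE {..<b} (\<lambda>_. {..<n})" using p pe unfolding batches_def by simp
    have g': "g' \<in> PiE {..<b} (\<lambda>_. {..<n})" using p' pe' unfolding batches_def by simp
    have e: "g(b := y) = g'(b := y')" using e0 pe pe' by simp
    have "y = y'" using fun_cong[OF e, of b] by simp
    moreover have "g x = g' x" for x
    proof (cases "x = b")
      case True
      have "g x = undefined" using PiE_arb[OF g, of x] True by simp
      moreover have "g' x = undefined" using PiE_arb[OF g', of x] True by simp
      ultimately show ?thesis by simp
    next
      case False then show ?thesis using fun_cong[OF e, of x] by simp
    qed
    ultimately show "p = p'" using pe pe' by auto
  qed
  have "(\<Sum>B\<in>batches n (Suc b). F B) = (\<Sum>x\<in>{..<n} \<times> batches n b. F ((\<lambda>(y, g). g(b := y)) x))"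
    unfolding eq by (subst sum.reindex[OF inj]) (simp add: comp_def)
  also have "\<dots> = (\<Sum>(y, g)\<in>{..<n} \<times> batches n b. F (g(b := y)))"
    by (simp add: case_prod_beta)
  also have "\<dots> = (\<Sum>c<n. \<Sum>B\<in>batches n b. F (B(b := c)))"
    by (rule sum.cartesian_product[symmetric])
  finally show ?thesis .
qed

lemma EB_Suc: "n > 0 \<Longrightarrow> EB n (Suc b) F = (\<Sum>c<n. EB n b (\<lambda>B. F (B(b := c)))) / real n"
  unfolding EB_def batches_Suc_sum by (simp add: sum_divide_distrib[symmetric] divide_divide_eq_left mult.commute)

lemma EB_0: "EB n 0 F = F (\<lambda>_. undefined)"
  unfolding EB_def batches_def by simp

lemma EB_sum: "EB n b (\<lambda>B. \<Sum>x\<in>X. f x B) = (\<Sum>x\<in>X. EB n b (f x))"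
  unfolding EB_def by (metis (no_types) sum.swap sum_divide_distrib)

lemma card_batches: "card (batches n b) = n ^ b"
  unfolding batches_def by (simp add: card_PiE)

lemma finite_batches[simp]: "finite (batches n b)"
  unfolding batches_def by (simp add: finite_PiE)

lemma EB_const: "n > 0 \<Longrightarrow> EB n b (\<lambda>_. c) = c"
  unfolding EB_def by (simp add: card_batches)

lemma EB_mono: "(\<And>B. B \<in> batches n b \<Longrightarrow> f B \<le> g B) \<Longrightarrow> EB n b f \<le> EB n b g"
  unfolding EB_def by (intro divide_right_mono sum_mono) auto

lemma EB_cong: "(\<And>B. B \<in> batches n b \<Longrightarrow> f B = g B) \<Longrightarrow> EB n b f = EB n b g"
  unfolding EB_def by (simp cong: sum.cong)

lemma EB_abs: "\<bar>EB n b f\<bar> \<le> EB n b (\<lambda>B. \<bar>f B\<bar>)"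
  unfolding EB_def abs_divide by (simp add: divide_right_mono[OF sum_abs])

lemma EB_cmult: "EB n b (\<lambda>B. c * f B) = c * EB n b f"
  unfolding EB_def by (simp add: sum_distrib_left)

lemma EB_add: "EB n b (\<lambda>B. f B + g B) = EB n b f + EB n b g"
  unfolding EB_def by (simp add: sum.distrib add_divide_distrib)

lemma fun_upd_batches: "B \<in> batches n b \<Longrightarrow> c < n \<Longrightarrow> B(b := c) \<in> batches n (Suc b)"
  unfolding batches_def lessThan_Suc by (rule PiE_fun_upd) auto

lemma exp_minus_le: "(t::real) \<ge> 0 \<Longrightarrow> exp t - t \<le> exp (t^2)"
proof (cases "t \<le> 1")
  case True
  assume t: "t \<ge> 0"
  have "exp t \<le> 1 + t + t^2" using exp_bound[OF t True] .
  moreover have "1 + t^2 \<le> exp (t^2)" by (rule exp_ge_add_one_self)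
  ultimately show ?thesis by linarith
next
  case False
  assume t: "t \<ge> 0"
  then have "t \<le> t^2" using False by (simp add: power2_eq_square)
  then have "exp t \<le> exp (t^2)" by simp
  then show ?thesis using t by linarith
qed

lemma partial_exp_le: "(t::real) \<ge> 0 \<Longrightarrow> (\<Sum>p\<le>m. t^p / fact p) \<le> exp t"
proof -
  assume t: "t \<ge> 0"
  have s: "(\<lambda>p. t^p / fact p) sums exp t" using exp_converges[of t] by (simp add: divide_inverse_commute scaleR_conv_of_real)
  show ?thesis
    by (rule sum_le_suminf[OF sums_summable[OF s], unfolded sums_unique[OF s, symmetric]]) (auto simp: t)
qed

lemma partial_exp_no1: "(t::real) \<ge> 0 \<Longrightarrow> (\<Sum>p\<le>m. if p = 1 then 0 else t^p / fact p) \<le> exp (t^2)"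
proof -
  assume t: "t \<ge> 0"
  have "(\<Sum>p\<le>m. if p = 1 then 0 else t^p / fact p) \<le> exp t - t"
  proof (cases "m = 0")
    case True
    have "1 + t \<le> exp t" by (rule exp_ge_add_one_self)
    then show ?thesis using True by (simp add: algebra_simps)
  next
    case False
    have "(\<Sum>p\<le>m. t^p / fact p) = (\<Sum>p\<le>m. (if p = 1 then 0 else t^p / fact p) + (if p = 1 then t else 0))"
      by (intro sum.cong) auto
    also have "\<dots> = (\<Sum>p\<le>m. if p = 1 then 0 else t^p / fact p) + (\<Sum>p\<le>m. if p = 1 then t else 0)"
      by (rule sum.distrib)
    also have "(\<Sum>p\<le>m. if p = 1 then t else (0::real)) = t"
      using False by (simp add: sum.delta)
    finally show ?thesis using partial_exp_le[OF t, of m] by linarith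
  qed
  then show ?thesis using exp_minus_le[OF t] by linarith
qed

lemma comb_bound:
  assumes "finite A" "(t::real) \<ge> 0"
  shows "(\<Sum>Q\<in>Pow A. if card Q = 1 then 0 else fact (card A - card Q) * t ^ card Q) \<le> fact (card A) * exp (t^2)"
proof -
  let ?m = "card A"
  let ?h = "\<lambda>Q. if card Q = 1 then 0 else fact (?m - card Q) * t ^ card Q :: real"
  have "(\<Sum>Q\<in>Pow A. ?h Q) = (\<Sum>p\<in>{..?m}. \<Sum>Q\<in>{Q \<in> Pow A. card Q = p}. ?h Q)"
    by (rule sum.group[symmetric]) (auto simp: assms card_mono)
  also have "\<dots> = (\<Sum>p\<in>{..?m}. of_nat (?m choose p) * (if p = 1 then 0 else fact (?m - p) * t ^ p))"
  proof (rule sum.cong[OF refl])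
    fix p
    have "(\<Sum>Q\<in>{Q \<in> Pow A. card Q = p}. ?h Q) = (\<Sum>Q\<in>{Q \<in> Pow A. card Q = p}. (if p = 1 then 0 else fact (?m - p) * t ^ p))"
      by (rule sum.cong) auto
    also have "\<dots> = of_nat (card {Q. Q \<subseteq> A \<and> card Q = p}) * (if p = 1 then 0 else fact (?m - p) * t ^ p)"
      by simp
    also have "card {Q. Q \<subseteq> A \<and> card Q = p} = ?m choose p" by (rule n_subsets[OF assms(1)])
    finally show "(\<Sum>Q\<in>{Q \<in> Pow A. card Q = p}. ?h Q) = of_nat (?m choose p) * (if p = 1 then 0 else fact (?m - p) * t ^ p)" .
  qed
  also have "\<dots> = (\<Sum>p\<in>{..?m}. fact ?m * (if p = 1 then 0 else t ^ p / fact p))"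
  proof (rule sum.cong[OF refl])
    fix p assume "p \<in> {..?m}"
    then have "p \<le> ?m" by simp
    then have "of_nat (?m choose p) * fact (?m - p) = (fact ?m / fact p :: real)"
      by (simp add: binomial_fact)
    then show "of_nat (?m choose p) * (if p = 1 then 0 else fact (?m - p) * t ^ p) = fact ?m * (if p = 1 then 0 else t ^ p / fact p :: real)"
      by (auto simp: field_simps)
  qed
  also have "\<dots> = fact ?m * (\<Sum>p\<le>?m. if p = 1 then 0 else t ^ p / fact p)"
    by (simp add: sum_distrib_left)
  also have "\<dots> \<le> fact ?m * exp (t^2)"
    by (rule mult_left_mono[OF partial_exp_no1[OF assms(2)]]) simp
  finally show ?thesis .
qed

definition ev :: "mat \<Rightarrow> mat + bool \<Rightarrow> mat" where
  "ev S s = (case s of Inl C \<Rightarrow> C | Inr t \<Rightarrow> if t then mT S else S)"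
definition rnd :: "(nat \<Rightarrow> mat + bool) \<Rightarrow> nat \<Rightarrow> nat set" where
  "rnd sl L = {i. i < L \<and> \<not> isl (sl i)}"
definition fxs :: "(nat \<Rightarrow> mat + bool) \<Rightarrow> nat \<Rightarrow> nat set" where
  "fxs sl L = {i. i < L \<and> isl (sl i)}"
definition fxn :: "nat \<Rightarrow> (nat \<Rightarrow> mat + bool) \<Rightarrow> nat \<Rightarrow> real" where
  "fxn d sl L = (\<Prod>i\<in>fxs sl L. specnorm d (projl (sl i)))"
definition Ssum :: "(nat \<Rightarrow> mat) \<Rightarrow> nat \<Rightarrow> (nat \<Rightarrow> nat) \<Rightarrow> mat" where
  "Ssum Y b B = (\<Sum>k<b. Y (B k))"
definition slQ :: "(nat \<Rightarrow> mat + bool) \<Rightarrow> nat set \<Rightarrow> mat \<Rightarrow> nat \<Rightarrow> mat + bool" where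
  "slQ sl Q T = (\<lambda>i. if i \<in> Q then Inl (ev T (sl i)) else sl i)"

lemma finite_rnd[simp]: "finite (rnd sl L)" unfolding rnd_def by simp
lemma finite_fxs[simp]: "finite (fxs sl L)" unfolding fxs_def by simp
lemma rnd_sub: "rnd sl L \<subseteq> {..<L}" unfolding rnd_def by auto

lemma specnorm_ev_rnd: "\<not> isl s \<Longrightarrow> specnorm d (ev S s) = specnorm d S"
  by (cases s) (auto simp: ev_def specnorm_T)

lemma ev_fx: "isl s \<Longrightarrow> ev S s = projl s"
  by (cases s) (auto simp: ev_def)

lemma fxn_nonneg: "0 \<le> fxn d sl L"
  unfolding fxn_def by (rule prod_nonneg) simp

lemma prod_split:
  "(\<Prod>i<L. specnorm d (ev S (sl i))) = fxn d sl L * specnorm d S ^ card (rnd sl L)"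
proof -
  have u: "{..<L} = fxs sl L \<union> rnd sl L" unfolding fxs_def rnd_def by auto
  have disj: "fxs sl L \<inter> rnd sl L = {}" unfolding fxs_def rnd_def by auto
  have "(\<Prod>i<L. specnorm d (ev S (sl i))) = (\<Prod>i\<in>fxs sl L. specnorm d (ev S (sl i))) * (\<Prod>i\<in>rnd sl L. specnorm d (ev S (sl i)))"
    unfolding u by (rule prod.union_disjoint) (simp_all add: disj)
  also have "(\<Prod>i\<in>fxs sl L. specnorm d (ev S (sl i))) = fxn d sl L"
    unfolding fxn_def by (rule prod.cong) (auto simp: fxs_def ev_fx)
  also have "(\<Prod>i\<in>rnd sl L. specnorm d (ev S (sl i))) = (\<Prod>i\<in>rnd sl L. specnorm d S)"
    by (rule prod.cong) (auto simp: rnd_def specnorm_ev_rnd)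
  finally show ?thesis by simp
qed

lemma trace_bound:
  "\<bar>mtr d (mprod d L (\<lambda>i. ev S (sl i)))\<bar> \<le> real d * (fxn d sl L * specnorm d S ^ card (rnd sl L))"
proof -
  have "\<bar>mtr d (mprod d L (\<lambda>i. ev S (sl i)))\<bar> \<le> real d * specnorm d (mprod d L (\<lambda>i. ev S (sl i)))"
    by (rule mtr_bound)
  also have "\<dots> \<le> real d * (\<Prod>i<L. specnorm d (ev S (sl i)))"
    by (rule mult_left_mono[OF specnorm_mprod]) simp
  finally show ?thesis unfolding prod_split .
qed

lemma Ssum_upd: "B \<in> batches n b \<Longrightarrow> Ssum Y (Suc b) (B(b := c)) = Ssum Y b B + Y c"
  unfolding Ssum_def by (simp add: lessThan_Suc add.commute)

lemma ev_add: "ev (S + T) s = (if isl s then ev S s else ev S s + ev T s)"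
  by (cases s) (auto simp: ev_def mT_add)

lemma expand_tr:
  "mtr d (mprod d L (\<lambda>i. ev (S + T) (sl i)))
   = (\<Sum>Q\<in>Pow (rnd sl L). mtr d (mprod d L (\<lambda>i. ev S (slQ sl Q T i))))"
proof -
  have "(\<lambda>i. ev (S + T) (sl i)) = (\<lambda>i. if i \<in> {i. \<not> isl (sl i)} then ev S (sl i) + ev T (sl i) else ev S (sl i))"
    by (auto simp: ev_add)
  then have "mprod d L (\<lambda>i. ev (S + T) (sl i))
     = (\<Sum>Q\<in>Pow ({i. \<not> isl (sl i)} \<inter> {..<L}). mprod d L (\<lambda>i. if i \<in> Q then ev T (sl i) else ev S (sl i)))"
    by (simp only: mprod_expand)
  also have "{i. \<not> isl (sl i)} \<inter> {..<L} = rnd sl L" unfolding rnd_def by auto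
  also have "(\<lambda>Q. mprod d L (\<lambda>i. if i \<in> Q then ev T (sl i) else ev S (sl i))) = (\<lambda>Q. mprod d L (\<lambda>i. ev S (slQ sl Q T i)))"
  proof -
    have "(\<lambda>i. if i \<in> Q then ev T (sl i) else ev S (sl i)) = (\<lambda>i. ev S (slQ sl Q T i))" for Q
      by (rule ext) (simp add: slQ_def ev_def)
    then show ?thesis by simp
  qed
  finally show ?thesis unfolding mtr_sum[symmetric] by (rule arg_cong)
qed

lemma rnd_slQ: "rnd (slQ sl Q T) L = rnd sl L - Q"
  unfolding rnd_def slQ_def by auto

lemma fxn_slQ:
  assumes "Q \<subseteq> rnd sl L"
  shows "fxn d (slQ sl Q T) L = fxn d sl L * specnorm d T ^ card Q"
proof -
  have u: "fxs (slQ sl Q T) L = fxs sl L \<union> Q" using assms unfolding fxs_def rnd_def slQ_def by auto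
  have disj: "fxs sl L \<inter> Q = {}" using assms unfolding fxs_def rnd_def by auto
  have fQ: "finite Q" using assms finite_subset finite_rnd by blast
  have "fxn d (slQ sl Q T) L = (\<Prod>i\<in>fxs sl L. specnorm d (projl (slQ sl Q T i))) * (\<Prod>i\<in>Q. specnorm d (projl (slQ sl Q T i)))"
    unfolding fxn_def u by (rule prod.union_disjoint) (simp_all add: disj fQ)
  also have "(\<Prod>i\<in>fxs sl L. specnorm d (projl (slQ sl Q T i))) = fxn d sl L"
    unfolding fxn_def using disj by (intro prod.cong) (auto simp: slQ_def)
  also have "(\<Prod>i\<in>Q. specnorm d (projl (slQ sl Q T i))) = (\<Prod>i\<in>Q. specnorm d T)"
    using assms by (intro prod.cong) (auto simp: slQ_def rnd_def specnorm_ev_rnd)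
  finally show ?thesis by simp
qed

lemma power_ratio: "(t::real) > 0 \<Longrightarrow> q \<le> m \<Longrightarrow> 1 / t ^ (m - q) = t ^ q / t ^ m"
  by (simp add: power_diff)

lemma moment:
  fixes Y :: "nat \<Rightarrow> mat"
  assumes n: "0 < n" and Y0: "meq d (\<Sum>c<n. Y c) (\<lambda>_ _. 0)"
    and YR: "\<And>c. c < n \<Longrightarrow> specnorm d (Y c) \<le> R" and t: "0 < t"
  shows "\<bar>EB n b (\<lambda>B. mtr d (mprod d L (\<lambda>i. ev (Ssum Y b B) (sl i))))\<bar>
     \<le> real d * fxn d sl L * R ^ card (rnd sl L) * fact (card (rnd sl L)) * exp (real b * t^2) / t ^ card (rnd sl L)"
proof (induction b arbitrary: sl)
  have R0: "0 \<le> R" using YR[OF n] specnorm_nonneg[of d "Y 0"] by linarith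
  case 0
  let ?m = "card (rnd sl L)"
  have S0: "Ssum Y 0 B = 0" for B unfolding Ssum_def by simp
  have sn0: "specnorm d (0::mat) = 0" by (rule specnorm_zero) (simp add: meq_def)
  have "\<bar>EB n 0 (\<lambda>B. mtr d (mprod d L (\<lambda>i. ev (Ssum Y 0 B) (sl i))))\<bar> \<le> real d * (fxn d sl L * 0 ^ ?m)"
    unfolding EB_0 S0 using trace_bound[of d L 0 sl] sn0 by simp
  also have "\<dots> \<le> real d * fxn d sl L * R ^ ?m * fact ?m * exp (real 0 * t^2) / t ^ ?m"
  proof (cases "?m = 0")
    case True then show ?thesis by simp
  next
    case False
    then have z: "(0::real) ^ ?m = 0" by (metis power_0_left)
    have "0 \<le> real d * fxn d sl L * R ^ ?m * fact ?m * exp (real 0 * t^2) / t ^ ?m"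
      using R0 t fxn_nonneg[of d sl L] by (intro divide_nonneg_pos mult_nonneg_nonneg) auto
    then show ?thesis unfolding z by simp
  qed
  finally show ?case .
next
  case (Suc b)
  have R0: "0 \<le> R" using YR[OF n] specnorm_nonneg[of d "Y 0"] by linarith
  let ?A = "rnd sl L"
  let ?m = "card ?A"
  let ?g = "\<lambda>Q c B. mtr d (mprod d L (\<lambda>i. ev (Ssum Y b B) (slQ sl Q (Y c) i)))"
  define X where "X Q = (\<Sum>c<n. EB n b (?g Q c)) / real n" for Q
  define K where "K = real d * fxn d sl L * R ^ ?m * exp (real b * t^2) / t ^ ?m"
  have K0: "0 \<le> K" unfolding K_def using R0 t fxn_nonneg[of d sl L] by simp
  have 1: "EB n (Suc b) (\<lambda>B. mtr d (mprod d L (\<lambda>i. ev (Ssum Y (Suc b) B) (sl i)))) = (\<Sum>Q\<in>Pow ?A. X Q)"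
  proof -
    have "EB n (Suc b) (\<lambda>B. mtr d (mprod d L (\<lambda>i. ev (Ssum Y (Suc b) B) (sl i))))
        = (\<Sum>c<n. EB n b (\<lambda>B. \<Sum>Q\<in>Pow ?A. ?g Q c B)) / real n"
      unfolding EB_Suc[OF n]
      by (intro arg_cong[where f="\<lambda>x. x / real n"] sum.cong refl EB_cong)
         (simp add: Ssum_upd expand_tr)
    also have "\<dots> = (\<Sum>c<n. \<Sum>Q\<in>Pow ?A. EB n b (?g Q c)) / real n"
      by (simp add: EB_sum)
    also have "\<dots> = (\<Sum>Q\<in>Pow ?A. X Q)"
      unfolding X_def by (subst sum.swap) (simp add: sum_divide_distrib)
    finally show ?thesis .
  qed
  have 2: "X Q = 0" if Q: "Q \<in> Pow ?A" "card Q = 1" for Q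
  proof -
    obtain i where Qi: "Q = {i}" using Q(2) card_1_singletonE by blast
    have iA: "i \<in> ?A" using Q Qi by auto
    then have iL: "i < L" and ir: "\<not> isl (sl i)" unfolding rnd_def by auto
    have "(\<Sum>c<n. ?g Q c B) = 0" for B
    proof -
      let ?F = "\<lambda>j. ev (Ssum Y b B) (sl j)"
      have "(\<lambda>j. ev (Ssum Y b B) (slQ sl Q (Y c) j)) = ?F(i := ev (Y c) (sl i))" for c
        unfolding Qi slQ_def by (auto simp: ev_def)
      then have "(\<Sum>c<n. ?g Q c B) = (\<Sum>c<n. mtr d (mprod d L (?F(i := ev (Y c) (sl i)))))"
        by simp
      also have "\<dots> = mtr d (\<Sum>c<n. mprod d L (?F(i := ev (Y c) (sl i))))"
        by (simp add: mtr_sum)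
      also have "\<dots> = mtr d (mprod d L (?F(i := \<Sum>c<n. ev (Y c) (sl i))))"
        by (simp add: mprod_lin[OF iL])
      also have "mprod d L (?F(i := \<Sum>c<n. ev (Y c) (sl i))) = (\<lambda>_ _. 0)"
      proof (rule mprod_zero_slot[OF iL])
        obtain tf where "sl i = Inr tf" using ir by (cases "sl i") auto
        then have "(\<Sum>c<n. ev (Y c) (sl i)) = (if tf then mT (\<Sum>c<n. Y c) else (\<Sum>c<n. Y c))"
          by (auto simp: ev_def mT_sum)
        then show "meq d ((?F(i := \<Sum>c<n. ev (Y c) (sl i))) i) (\<lambda>_ _. 0)"
          using Y0 by (auto simp: meq_def mT_def)
      qed
      also have "mtr d (\<lambda>_ _. 0) = 0" by (simp add: mtr_def)
      finally show ?thesis .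
    qed
    then have "(\<Sum>c<n. EB n b (?g Q c)) = 0"
      using EB_sum[where X="{..<n}" and f="\<lambda>c B. ?g Q c B" and n=n and b=b] EB_const[OF n, of b 0] by simp
    then show ?thesis unfolding X_def by simp
  qed
  have 3: "\<bar>X Q\<bar> \<le> K * (fact (?m - card Q) * t ^ card Q)" if Q: "Q \<in> Pow ?A" for Q
  proof -
    have QA: "Q \<subseteq> ?A" using Q by simp
    have fQ: "finite Q" using QA finite_subset finite_rnd by blast
    have cQ: "card Q \<le> ?m" using QA by (simp add: card_mono)
    have cm: "card (rnd (slQ sl Q (Y c)) L) = ?m - card Q" for c
      unfolding rnd_slQ using QA fQ by (simp add: card_Diff_subset)
    have each: "\<bar>EB n b (?g Q c)\<bar> \<le> K * (fact (?m - card Q) * t ^ card Q)" if c: "c < n" for c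
    proof -
      have "\<bar>EB n b (?g Q c)\<bar> \<le> real d * fxn d (slQ sl Q (Y c)) L * R ^ (?m - card Q) * fact (?m - card Q)
              * exp (real b * t^2) / t ^ (?m - card Q)"
        using Suc.IH[of "slQ sl Q (Y c)"] unfolding cm .
      also have "fxn d (slQ sl Q (Y c)) L = fxn d sl L * specnorm d (Y c) ^ card Q"
        by (rule fxn_slQ[OF QA])
      also have "real d * (fxn d sl L * specnorm d (Y c) ^ card Q) * R ^ (?m - card Q) * fact (?m - card Q)
              * exp (real b * t^2) / t ^ (?m - card Q)
          \<le> real d * (fxn d sl L * R ^ card Q) * R ^ (?m - card Q) * fact (?m - card Q)
              * exp (real b * t^2) / t ^ (?m - card Q)"
        using YR[OF c] fxn_nonneg[of d sl L] R0 t
        by (intro divide_right_mono mult_right_mono mult_left_mono power_mono) auto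
      also have "\<dots> = real d * fxn d sl L * (R ^ card Q * R ^ (?m - card Q)) * fact (?m - card Q)
              * exp (real b * t^2) * (1 / t ^ (?m - card Q))"
        by (simp add: ac_simps)
      also have "\<dots> = K * (fact (?m - card Q) * t ^ card Q)"
        unfolding power_ratio[OF t cQ] power_add[symmetric] K_def using cQ by simp
      finally show ?thesis .
    qed
    have "\<bar>X Q\<bar> \<le> (\<Sum>c<n. \<bar>EB n b (?g Q c)\<bar>) / real n"
      unfolding X_def abs_divide by (simp add: divide_right_mono sum_abs)
    also have "\<dots> \<le> (\<Sum>c<n. K * (fact (?m - card Q) * t ^ card Q)) / real n"
      by (intro divide_right_mono sum_mono each) auto
    also have "\<dots> = K * (fact (?m - card Q) * t ^ card Q)" using n by simp
    finally show ?thesis .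
  qed
  have "\<bar>EB n (Suc b) (\<lambda>B. mtr d (mprod d L (\<lambda>i. ev (Ssum Y (Suc b) B) (sl i))))\<bar> \<le> (\<Sum>Q\<in>Pow ?A. \<bar>X Q\<bar>)"
    unfolding 1 by (rule sum_abs)
  also have "\<dots> \<le> (\<Sum>Q\<in>Pow ?A. K * (if card Q = 1 then 0 else fact (?m - card Q) * t ^ card Q))"
    using 2 3 by (intro sum_mono) auto
  also have "\<dots> = K * (\<Sum>Q\<in>Pow ?A. if card Q = 1 then 0 else fact (?m - card Q) * t ^ card Q)"
    by (simp add: sum_distrib_left)
  also have "\<dots> \<le> K * (fact ?m * exp (t^2))"
    using t by (intro mult_left_mono[OF comb_bound K0]) auto
  also have "\<dots> = real d * fxn d sl L * R ^ ?m * fact ?m * exp (real (Suc b) * t^2) / t ^ ?m"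
    unfolding K_def by (simp add: exp_add[symmetric] distrib_right)
  finally show ?case .
qed

fun Zp :: "nat \<Rightarrow> nat \<Rightarrow> mat \<Rightarrow> mat" where
  "Zp d 0 S = mprod d 1 (\<lambda>_. S)"
| "Zp d (Suc k) S = mmul d (mT (Zp d k S)) (Zp d k S)"

definition flip :: "mat + bool \<Rightarrow> mat + bool" where
  "flip s = (case s of Inl C \<Rightarrow> Inl C | Inr t \<Rightarrow> Inr (\<not> t))"

lemma mT_ev_flip: "\<not> isl s \<Longrightarrow> mT (ev S s) = ev S (flip s)"
  by (cases s) (auto simp: ev_def flip_def)

lemma isl_flip: "isl (flip s) = isl s"
  by (cases s) (auto simp: flip_def)

lemma Zp_word: "\<exists>w. (\<forall>i. \<not> isl (w i)) \<and> (\<forall>S. Zp d k S = mprod d (2^k) (\<lambda>i. ev S (w i)))"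
proof (induction k)
  case 0
  show ?case by (rule exI[of _ "\<lambda>_. Inr False"]) (simp add: ev_def)
next
  case (Suc k)
  then obtain w where w: "\<forall>i. \<not> isl (w i)" "\<forall>S. Zp d k S = mprod d (2^k) (\<lambda>i. ev S (w i))" by blast
  let ?h = "2^k :: nat"
  define w' where "w' i = (if i < ?h then flip (w (?h - 1 - i)) else w (i - ?h))" for i
  have w'r: "\<forall>i. \<not> isl (w' i)" using w(1) unfolding w'_def by (simp add: isl_flip)
  have "Zp d (Suc k) S = mprod d (2^Suc k) (\<lambda>i. ev S (w' i))" for S
  proof -
    have "Zp d (Suc k) S = mmul d (mprod d ?h (\<lambda>i. mT (ev S (w (?h - 1 - i))))) (mprod d ?h (\<lambda>i. ev S (w i)))"
      by (simp add: w(2) mprod_T)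
    also have "mprod d ?h (\<lambda>i. mT (ev S (w (?h - 1 - i)))) = mprod d ?h (\<lambda>i. ev S (w' i))"
      by (rule mprod_cong) (simp add: w'_def mT_ev_flip w(1))
    also have "mprod d ?h (\<lambda>i. ev S (w i)) = mprod d ?h (\<lambda>i. ev S (w' (?h + i)))"
      by (rule mprod_cong) (simp add: w'_def)
    also have "mmul d (mprod d ?h (\<lambda>i. ev S (w' i))) (mprod d ?h (\<lambda>i. ev S (w' (?h + i))))
        = mprod d (?h + ?h) (\<lambda>i. ev S (w' i))"
      by (rule mprod_append[symmetric])
    also have "?h + ?h = 2^Suc k" by simp
    finally show ?thesis .
  qed
  then show ?case using w'r by blast
qed

lemma specnorm_Zp: "specnorm d (Zp d k S) = specnorm d S ^ (2^k)"
proof (induction k)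
  case 0
  have "specnorm d (mmul d (mid d) S) = specnorm d S" by (rule specnorm_cong[OF meq_mid_left])
  then show ?case by simp
next
  case (Suc k)
  then show ?case by (simp add: specnorm_cstar power_mult[symmetric] mult.commute)
qed

lemma pow_le_tr: "specnorm d S ^ (2^Suc k) \<le> mtr d (Zp d (Suc k) S)"
proof -
  have "specnorm d S ^ (2^Suc k) = (specnorm d (Zp d k S))^2"
    by (simp add: specnorm_Zp power_mult[symmetric] mult.commute)
  also have "\<dots> \<le> frob d (Zp d k S)" by (rule specnorm_frob)
  also have "\<dots> = mtr d (Zp d (Suc k) S)" by (simp add: mtr_frob)
  finally show ?thesis .
qed

lemma mom_norm:
  fixes Y :: "nat \<Rightarrow> mat"
  assumes n: "0 < n" and Y0: "meq d (\<Sum>c<n. Y c) (\<lambda>_ _. 0)"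
    and YR: "\<And>c. c < n \<Longrightarrow> specnorm d (Y c) \<le> R" and t: "0 < t"
  shows "EB n b (\<lambda>B. specnorm d (Ssum Y b B) ^ (2^Suc k))
     \<le> real d * R ^ (2^Suc k) * fact (2^Suc k) * exp (real b * t^2) / t ^ (2^Suc k)"
proof -
  obtain w where w: "\<forall>i. \<not> isl (w i)" "\<forall>S. Zp d (Suc k) S = mprod d (2^Suc k) (\<lambda>i. ev S (w i))"
    using Zp_word by blast
  let ?M = "2^Suc k :: nat"
  have r: "rnd w ?M = {..<?M}" using w(1) unfolding rnd_def by auto
  have f: "fxn d w ?M = 1" using w(1) unfolding fxn_def fxs_def by simp
  have "EB n b (\<lambda>B. specnorm d (Ssum Y b B) ^ ?M) \<le> EB n b (\<lambda>B. mtr d (mprod d ?M (\<lambda>i. ev (Ssum Y b B) (w i))))"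
    by (rule EB_mono) (metis pow_le_tr w(2))
  also have "\<dots> \<le> \<bar>\<dots>\<bar>" by simp
  also have "\<dots> \<le> real d * fxn d w ?M * R ^ card (rnd w ?M) * fact (card (rnd w ?M)) * exp (real b * t^2) / t ^ card (rnd w ?M)"
    by (rule moment[OF n Y0 YR t])
  finally show ?thesis unfolding r f by simp
qed

lemma pow2_between: "(x::real) \<ge> 1 \<Longrightarrow> \<exists>j. x \<le> 2^j \<and> 2^j < 2 * x"
proof -
  assume x: "x \<ge> 1"
  obtain N where "x < 2^N" using real_arch_pow[of "2::real" x] by auto
  then have ex: "\<exists>j. x \<le> 2^j" by (auto intro: less_imp_le)
  define j where "j = (LEAST j. x \<le> (2::real)^j)"
  have j1: "x \<le> 2^j" unfolding j_def by (rule LeastI_ex[OF ex])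
  have "2^j < 2 * x"
  proof (cases j)
    case 0 then show ?thesis using x by simp
  next
    case (Suc j')
    then have "\<not> x \<le> 2^j'" using not_less_Least[of j' "\<lambda>j. x \<le> (2::real)^j"] unfolding j_def by simp
    then show ?thesis using Suc by simp
  qed
  then show ?thesis using j1 by blast
qed

lemma EB_nonneg_zero:
  assumes n: "0 < n" and nn: "\<And>B. B \<in> batches n b \<Longrightarrow> 0 \<le> f B" and le: "EB n b f \<le> 0"
    and B: "B \<in> batches n b"
  shows "f B = 0"
proof -
  have np: "real n ^ b > 0" using n by simp
  have "sum f (batches n b) \<le> 0" using le np unfolding EB_def by (auto simp: divide_le_0_iff)
  moreover have "0 \<le> sum f (batches n b)" using nn by (simp add: sum_nonneg)
  ultimately have "sum f (batches n b) = 0" by simp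
  then show ?thesis using sum_nonneg_eq_0_iff[of "batches n b" f] nn B by simp
qed

lemma third_from_high:
  assumes n: "0 < n" and h: "h \<ge> 2" and a: "a \<ge> 0"
    and nn: "\<And>B. 0 \<le> X B" and hi: "EB n b (\<lambda>B. X B ^ (2*h)) \<le> a ^ (2*h)"
  shows "EB n b (\<lambda>B. X B ^ 3) \<le> 2 * a ^ 3"
proof (cases "a = 0")
  case True
  have "X B ^ (2*h) = 0" if "B \<in> batches n b" for B
  proof -
    have z: "(0::real) ^ (2*h) = 0" using h by simp
    from hi have le0: "EB n b (\<lambda>B. X B ^ (2*h)) \<le> 0" unfolding True z .
    show ?thesis by (rule EB_nonneg_zero[OF n _ le0 that]) (simp add: nn)
  qed
  then have "EB n b (\<lambda>B. X B ^ 3) = EB n b (\<lambda>_. 0)" using h by (intro EB_cong) simp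
  then show ?thesis using EB_const[OF n] True by simp
next
  case False
  then have ap: "a > 0" using a by simp
  have pt: "X B ^ 3 \<le> a ^ 3 + X B ^ (2*h) / a ^ (2*h - 3)" for B
  proof (cases "X B \<le> a")
    case True
    then have "X B ^ 3 \<le> a ^ 3" using nn by (simp add: power_mono)
    moreover have "0 \<le> X B ^ (2*h) / a ^ (2*h - 3)" using nn ap by simp
    ultimately show ?thesis by linarith
  next
    case False
    have "X B ^ 3 * a ^ (2*h - 3) \<le> X B ^ 3 * X B ^ (2*h - 3)"
      using False ap nn by (intro mult_left_mono power_mono) auto
    also have "\<dots> = X B ^ (2*h)" using h by (simp add: power_add[symmetric])
    finally have "X B ^ 3 \<le> X B ^ (2*h) / a ^ (2*h - 3)" using ap by (simp add: field_simps)
    then show ?thesis using ap by (smt (verit) zero_le_power)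
  qed
  have "EB n b (\<lambda>B. X B ^ 3) \<le> EB n b (\<lambda>B. a ^ 3 + X B ^ (2*h) / a ^ (2*h - 3))"
    by (rule EB_mono) (rule pt)
  also have "\<dots> = a ^ 3 + EB n b (\<lambda>B. X B ^ (2*h)) / a ^ (2*h - 3)"
    using EB_add[of n b "\<lambda>_. a^3" "\<lambda>B. X B ^ (2*h) / a ^ (2*h - 3)"] EB_const[OF n]
      EB_cmult[of n b "1 / a ^ (2*h - 3)" "\<lambda>B. X B ^ (2*h)"] by simp
  also have "\<dots> \<le> a ^ 3 + a ^ (2*h) / a ^ (2*h - 3)"
    using hi ap by (simp add: divide_right_mono)
  also have "a ^ (2*h) / a ^ (2*h - 3) = a ^ 3" using ap h by (simp add: power_diff)
  finally show ?thesis by simp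
qed

lemma mat_third:
  fixes Y :: "nat \<Rightarrow> mat"
  assumes n: "0 < n" and Y0: "meq d (\<Sum>c<n. Y c) (\<lambda>_ _. 0)"
    and YR: "\<And>c. c < n \<Longrightarrow> specnorm d (Y c) \<le> R" and R0: "0 \<le> R"
    and b: "b \<ge> 1" and d: "d \<ge> 2"
  shows "EB n b (\<lambda>B. specnorm d (Ssum Y b B) ^ 3) \<le> 2 * sqrt (24 * exp 2 * ln (real d) * real b * R^2) ^ 3"
proof -
  let ?l = "ln (real d)"
  have l23: "?l \<ge> 2/3"
  proof -
    have "ln 2 \<le> ?l" using d by simp
    then show ?thesis using ln2_ge_two_thirds by linarith
  qed
  let ?x = "max 1 ?l"
  obtain j where j: "?x \<le> 2^j" "2^j < 2 * ?x" using pow2_between[of ?x] by auto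
  define h :: nat where "h = 2 * 2^j"
  have hr: "real h = 2 * 2^j" unfolding h_def by simp
  have h2: "h \<ge> 2" unfolding h_def by simp
  have hl: "?l \<le> real h" using j(1) hr by linarith
  have hu: "real h \<le> 6 * ?l"
  proof -
    have "real h < 4 * ?x" using j(2) hr by linarith
    moreover have "4 * ?x \<le> 6 * ?l" using l23 by (auto simp: max_def)
    ultimately show ?thesis by linarith
  qed
  have hpos: "real h > 0" using h2 by simp
  have bpos: "real b > 0" using b by simp
  define t where "t = sqrt (real h / real b)"
  have tpos: "t > 0" unfolding t_def using hpos bpos by simp
  have t2: "t^2 = real h / real b" unfolding t_def using hpos bpos by simp
  have M: "(2::nat)^Suc (Suc j) = 2 * h" unfolding h_def by simp
  let ?X = "\<lambda>B. specnorm d (Ssum Y b B)"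
  have "EB n b (\<lambda>B. ?X B ^ (2*h)) \<le> real d * R ^ (2*h) * fact (2*h) * exp (real b * t^2) / t ^ (2*h)"
    using mom_norm[OF n Y0 YR tpos, of b "Suc j"] unfolding M .
  also have "\<dots> = real d * (R^2)^h * fact (2*h) * exp (real h) * (real b / real h)^h"
  proof -
    have e1: "R^(2*h) = (R^2)^h" by (simp add: power_mult)
    have e2: "t^(2*h) = (real h / real b)^h" by (simp add: power_mult t2)
    have e3: "real b * t^2 = real h" using t2 bpos by simp
    show ?thesis unfolding e1 e2 e3 using hpos bpos by (simp add: power_divide field_simps)
  qed
  also have "\<dots> \<le> exp (real h) * (R^2)^h * (4 * real h ^ 2)^h * exp (real h) * (real b / real h)^h"
  proof -
    have "real d \<le> exp (real h)"
    proof -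
      have "real d = exp ?l" using d by simp
      also have "\<dots> \<le> exp (real h)" using hl by simp
      finally show ?thesis .
    qed
    moreover have "(fact (2*h) :: real) \<le> (4 * real h ^ 2)^h"
    proof -
      have "(fact (2*h) :: real) \<le> of_nat ((2*h)^(2*h))" by (rule fact_le_power)
      also have "\<dots> = (4 * real h ^ 2)^h" by (simp add: power_mult power_mult_distrib)
      finally show ?thesis .
    qed
    ultimately show ?thesis using bpos hpos
      by (intro mult_right_mono mult_mono) auto
  qed
  also have "\<dots> = (4 * exp 2 * real h * real b * R^2)^h"
  proof -
    have e: "exp (real h) * exp (real h) = exp 2 ^ h"
      by (simp add: exp_add[symmetric] exp_of_nat_mult[symmetric] mult.commute)
    have "exp (real h) * (R^2)^h * (4 * real h ^ 2)^h * exp (real h) * (real b / real h)^h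
        = (exp (real h) * exp (real h)) * ((R^2) * (4 * real h ^ 2) * (real b / real h))^h"
    proof -
      have "(R^2)^h * (4 * real h ^ 2)^h * (real b / real h)^h = ((R^2) * (4 * real h ^ 2) * (real b / real h))^h"
        by (simp only: power_mult_distrib)
      then show ?thesis by (simp only: mult.assoc mult.commute mult.left_commute)
    qed
    also have "(R^2) * (4 * real h ^ 2) * (real b / real h) = 4 * real h * real b * R^2"
      using hpos by (simp add: power2_eq_square field_simps)
    finally show ?thesis unfolding e by (simp add: power_mult_distrib ac_simps)
  qed
  also have "\<dots> = sqrt (4 * exp 2 * real h * real b * R^2) ^ (2*h)"
    by (simp add: power_mult)
  finally have hi: "EB n b (\<lambda>B. ?X B ^ (2*h)) \<le> sqrt (4 * exp 2 * real h * real b * R^2) ^ (2*h)" .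
  have "EB n b (\<lambda>B. ?X B ^ 3) \<le> 2 * sqrt (4 * exp 2 * real h * real b * R^2) ^ 3"
    by (rule third_from_high[OF n h2 _ _ hi]) simp_all
  also have "\<dots> \<le> 2 * sqrt (24 * exp 2 * ?l * real b * R^2) ^ 3"
  proof -
    have "4 * exp 2 * real h * real b * R^2 \<le> 24 * exp 2 * ?l * real b * R^2"
      using hu bpos by (intro mult_right_mono) auto
    then show ?thesis by (intro mult_left_mono power_mono) auto
  qed
  finally show ?thesis .
qed

lemma vec_var:
  fixes z :: "nat \<Rightarrow> vec"
  assumes n: "0 < n" and Z0: "\<And>j. j < d \<Longrightarrow> (\<Sum>c<n. z c j) = 0"
  shows "EB n b (\<lambda>B. \<Sum>j<d. (\<Sum>k<b. z (B k) j)^2) = real b * (\<Sum>c<n. \<Sum>j<d. (z c j)^2) / real n"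
proof (induction b)
  case 0 then show ?case by (simp add: EB_0)
next
  case (Suc b)
  let ?W = "\<lambda>B j. \<Sum>k<b. z (B k) j"
  let ?V = "\<Sum>c<n. \<Sum>j<d. (z c j)^2"
  have upd: "(\<Sum>k<Suc b. z ((B(b := c)) k) j) = ?W B j + z c j" for B c j
    by (simp add: lessThan_Suc add.commute)
  have inner: "(\<Sum>c<n. \<Sum>j<d. (?W B j + z c j)^2) = real n * (\<Sum>j<d. (?W B j)^2) + ?V" for B
  proof -
    have "(\<Sum>c<n. \<Sum>j<d. (?W B j + z c j)^2) = (\<Sum>c<n. \<Sum>j<d. (?W B j)^2 + 2 * (?W B j * z c j) + (z c j)^2)"
      by (intro sum.cong refl) (simp add: power2_sum algebra_simps)
    also have "\<dots> = (\<Sum>c<n. \<Sum>j<d. (?W B j)^2) + 2 * (\<Sum>j<d. ?W B j * (\<Sum>c<n. z c j)) + ?V"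
      by (simp add: sum.distrib sum_distrib_left sum.swap[of _ "{..<n}" "{..<d}"])
    also have "(\<Sum>j<d. ?W B j * (\<Sum>c<n. z c j)) = 0" by (simp add: Z0)
    finally show ?thesis by simp
  qed
  have "EB n (Suc b) (\<lambda>B. \<Sum>j<d. (\<Sum>k<Suc b. z (B k) j)^2)
      = (\<Sum>c<n. EB n b (\<lambda>B. \<Sum>j<d. (?W B j + z c j)^2)) / real n"
    unfolding EB_Suc[OF n] upd ..
  also have "\<dots> = EB n b (\<lambda>B. \<Sum>c<n. \<Sum>j<d. (?W B j + z c j)^2) / real n"
    by (simp add: EB_sum)
  also have "\<dots> = EB n b (\<lambda>B. real n * (\<Sum>j<d. (?W B j)^2) + ?V) / real n"
    unfolding inner ..
  also have "\<dots> = (real n * EB n b (\<lambda>B. \<Sum>j<d. (?W B j)^2) + ?V) / real n"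
    by (simp add: EB_add EB_cmult EB_const[OF n])
  also have "\<dots> = real (Suc b) * ?V / real n"
    unfolding Suc using n by (simp add: field_simps)
  finally show ?case .
qed

lemma centered_sq_le:
  fixes x :: "nat \<Rightarrow> real"
  assumes n: "0 < n"
  shows "(\<Sum>c<n. (x c - (\<Sum>c<n. x c) / real n)^2) \<le> (\<Sum>c<n. (x c)^2)"
proof -
  define m where "m = (\<Sum>c<n. x c) / real n"
  have s: "(\<Sum>c<n. x c) = real n * m" using n unfolding m_def by simp
  have "(\<Sum>c<n. (x c - m)^2) = (\<Sum>c<n. (x c)^2 + (m^2 - 2 * m * x c))"
    by (intro sum.cong refl) (simp add: power2_eq_square algebra_simps)
  also have "\<dots> = (\<Sum>c<n. (x c)^2) + (\<Sum>c<n. m^2 - 2 * m * x c)" by (rule sum.distrib)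
  also have "(\<Sum>c<n. m^2 - 2 * m * x c) = real n * m^2 - 2 * m * (\<Sum>c<n. x c)"
    by (simp add: sum_subtractf sum_distrib_left)
  also have "\<dots> = - (real n * m^2)" unfolding s by (simp add: power2_eq_square)
  finally have "(\<Sum>c<n. (x c - m)^2) = (\<Sum>c<n. (x c)^2) - real n * m^2" by simp
  then show ?thesis unfolding m_def[symmetric] by simp
qed

lemma three_halves_pt:
  fixes s \<alpha> :: real
  assumes "0 \<le> s" "0 < \<alpha>"
  shows "s^3 \<le> (3/4) * s^4 / \<alpha> + (1/4) * \<alpha>^3"
proof -
  have "0 \<le> (s - \<alpha>)^2 * (3 * s^2 + 2 * s * \<alpha> + \<alpha>^2)"
    using assms by (intro mult_nonneg_nonneg) auto
  also have "(s - \<alpha>)^2 * (3 * s^2 + 2 * s * \<alpha> + \<alpha>^2) = 3 * s^4 - 4 * s^3 * \<alpha> + \<alpha>^4"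
    by (simp add: power2_eq_square power3_eq_cube power4_eq_xxxx algebra_simps)
  finally have "4 * s^3 * \<alpha> \<le> 3 * s^4 + \<alpha>^4" by simp
  then show ?thesis using assms by (simp add: field_simps power3_eq_cube power4_eq_xxxx)
qed

lemma alg34: "(a::real) > 0 \<Longrightarrow> (3/4) / a * a^4 + (1/4) * a^3 = a^3"
  by (simp add: field_simps power3_eq_cube power4_eq_xxxx)

lemma sqrt_pow4: "(y::real) \<ge> 0 \<Longrightarrow> sqrt y ^ 4 = y^2"
proof -
  assume y: "y \<ge> 0"
  have "sqrt y ^ 4 = (sqrt y ^ 2) ^ 2" by (simp add: power_mult[symmetric])
  then show ?thesis using y by simp
qed

lemma powr_three_halves: "(x::real) \<ge> 0 \<Longrightarrow> x powr (3/2) = sqrt x ^ 3"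
proof -
  assume x: "x \<ge> 0"
  show ?thesis
  proof (cases "x = 0")
    case True then show ?thesis by simp
  next
    case False
    then have xp: "x > 0" using x by simp
    have "x powr (3/2) = x powr (1 + 1/2)" by simp
    also have "\<dots> = x powr 1 * x powr (1/2)" by (rule powr_add)
    also have "\<dots> = x * sqrt x" using xp by (simp add: powr_half_sqrt)
    also have "\<dots> = sqrt x ^ 3" using x by (simp add: power3_eq_cube)
    finally show ?thesis .
  qed
qed

lemma vec_part:
  fixes z :: "nat \<Rightarrow> vec"
  assumes n: "0 < n" and b: "b \<ge> 1" and Z0: "\<And>j. j < d \<Longrightarrow> (\<Sum>c<n. z c j) = 0"
    and K: "(\<Sum>c<n. (vnorm d (z c))^2) \<le> real n * K^2" and K0: "K \<ge> 0"
  shows "EB n b (\<lambda>B. vnorm d (\<lambda>j. (\<Sum>k<b. z (B k) j) / real b) powr (3/2)) \<le> (K / sqrt (real b)) powr (3/2)"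
proof -
  let ?X = "\<lambda>B. vnorm d (\<lambda>j. (\<Sum>k<b. z (B k) j) / real b)"
  have bp: "real b > 0" using b by simp
  have X2: "(?X B)^2 = (\<Sum>j<d. (\<Sum>k<b. z (B k) j)^2) / (real b)^2" for B
    unfolding vnorm_sq power_divide by (rule sum_divide_distrib[symmetric])
  have EX2: "EB n b (\<lambda>B. (?X B)^2) \<le> K^2 / real b"
  proof -
    have "EB n b (\<lambda>B. (?X B)^2) = EB n b (\<lambda>B. \<Sum>j<d. (\<Sum>k<b. z (B k) j)^2) / (real b)^2"
      unfolding X2 using EB_cmult[of n b "1 / (real b)^2"] by simp
    also have "\<dots> = real b * (\<Sum>c<n. \<Sum>j<d. (z c j)^2) / real n / (real b)^2"
      by (simp add: vec_var[OF n Z0])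
    also have "(\<Sum>c<n. \<Sum>j<d. (z c j)^2) = (\<Sum>c<n. (vnorm d (z c))^2)" by (simp add: vnorm_sq)
    also have "real b * (\<Sum>c<n. (vnorm d (z c))^2) / real n / (real b)^2 \<le> real b * (real n * K^2) / real n / (real b)^2"
      using K bp n by (intro divide_right_mono mult_left_mono) auto
    also have "\<dots> = K^2 / real b" using bp n by (simp add: field_simps power2_eq_square)
    finally show ?thesis .
  qed
  let ?A = "K / sqrt (real b)"
  let ?al = "sqrt ?A"
  have A0: "?A \<ge> 0" using K0 by simp
  have lhs: "EB n b (\<lambda>B. ?X B powr (3/2)) = EB n b (\<lambda>B. sqrt (?X B) ^ 3)"
    by (intro EB_cong) (simp add: powr_three_halves)
  have rhs: "?A powr (3/2) = ?al ^ 3" using A0 by (simp add: powr_three_halves)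
  have A2: "K^2 / real b = ?A^2" using bp by (simp add: power_divide)
  show ?thesis
  proof (cases "K = 0")
    case True
    have "(?X B)^2 = 0" if "B \<in> batches n b" for B
      by (rule EB_nonneg_zero[OF n _ _ that]) (use EX2 True in auto)
    then have "EB n b (\<lambda>B. sqrt (?X B) ^ 3) = EB n b (\<lambda>_. 0)" by (intro EB_cong) simp
    then show ?thesis unfolding lhs rhs using EB_const[OF n] True by simp
  next
    case False
    then have alp: "?al > 0" using K0 bp by simp
    have pt: "sqrt (?X B) ^ 3 \<le> (3/4) * (?X B)^2 / ?al + (1/4) * ?al^3" for B
    proof -
      have "(?X B)^2 = sqrt (?X B) ^ 4" by (simp add: sqrt_pow4)
      then show ?thesis using three_halves_pt[of "sqrt (?X B)" ?al] alp by simp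
    qed
    have "EB n b (\<lambda>B. sqrt (?X B) ^ 3) \<le> EB n b (\<lambda>B. (3/4) * (?X B)^2 / ?al + (1/4) * ?al^3)"
      by (rule EB_mono) (rule pt)
    also have "\<dots> = (3/4) / ?al * EB n b (\<lambda>B. (?X B)^2) + (1/4) * ?al^3"
      using EB_add[of n b "\<lambda>B. (3/4) * (?X B)^2 / ?al" "\<lambda>_. (1/4) * ?al^3"]
        EB_cmult[of n b "(3/4) / ?al" "\<lambda>B. (?X B)^2"] EB_const[OF n] by simp
    also have "\<dots> \<le> (3/4) / ?al * ?A^2 + (1/4) * ?al^3"
      using EX2 A2 alp by (intro add_right_mono mult_left_mono) auto
    also have "?A^2 = ?al^4" using A0 by (simp only: sqrt_pow4)
    also have "(3/4) / ?al * ?al^4 + (1/4) * ?al^3 = ?al^3" by (rule alg34[OF alp])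
    finally show ?thesis unfolding lhs rhs .
  qed
qed

definition ej :: "nat \<Rightarrow> real \<Rightarrow> vec" where "ej j s = (\<lambda>i. if i = j then s else 0)"

lemma ej_Rd: "j < d \<Longrightarrow> ej j s \<in> Rd d" unfolding ej_def Rd_def by auto
lemma vnorm_ej: "j < d \<Longrightarrow> vnorm d (ej j s) = \<bar>s\<bar>"
  unfolding vnorm_def ej_def by (subst sum.cong[OF refl, of _ _ "\<lambda>i. if i = j then s^2 else 0"]) auto
lemma vinner_ej: "j < d \<Longrightarrow> vinner d g (ej j s) = g j * s"
  unfolding vinner_def ej_def by (subst sum.cong[OF refl, of _ _ "\<lambda>i. if i = j then g j * s else 0"]) auto
lemma mv_ej: "i < d \<Longrightarrow> j < d \<Longrightarrow> mv d H (ej j s) i = H i j * s"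
  unfolding mv_def ej_def by (subst sum.cong[OF refl, of _ _ "\<lambda>k. if k = j then H i j * s else 0"]) auto

lemma small_all_eq: "(\<And>e. e > 0 \<Longrightarrow> \<bar>a - b\<bar> \<le> 2 * e) \<Longrightarrow> (a::real) = b"
proof (rule ccontr)
  assume h: "\<And>e. e > 0 \<Longrightarrow> \<bar>a - b\<bar> \<le> 2 * e" and ne: "a \<noteq> b"
  then have "\<bar>a - b\<bar> \<le> 2 * (\<bar>a - b\<bar> / 4)" using h[of "\<bar>a - b\<bar> / 4"] by simp
  then show False using ne by simp
qed

lemma has_grad_unique:
  assumes g: "has_grad d f g x" and g': "has_grad d f g' x" and j: "j < d"
  shows "g j = g' j"
proof (rule small_all_eq)
  fix e :: real assume e: "e > 0"
  obtain r1 where r1: "r1 > 0" "\<forall>h\<in>Rd d. vnorm d h < r1 \<longrightarrow> \<bar>f (x + h) - f x - vinner d g h\<bar> \<le> e * vnorm d h"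
    using g e unfolding has_grad_def by blast
  obtain r2 where r2: "r2 > 0" "\<forall>h\<in>Rd d. vnorm d h < r2 \<longrightarrow> \<bar>f (x + h) - f x - vinner d g' h\<bar> \<le> e * vnorm d h"
    using g' e unfolding has_grad_def by blast
  define s where "s = min r1 r2 / 2"
  have s: "s > 0" "s < r1" "s < r2" unfolding s_def using r1 r2 by auto
  let ?h = "ej j s"
  have hR: "?h \<in> Rd d" by (rule ej_Rd[OF j])
  have hn: "vnorm d ?h = s" using vnorm_ej[OF j] s by simp
  have a1: "\<bar>f (x + ?h) - f x - g j * s\<bar> \<le> e * s" using r1(2) hR hn s vinner_ej[OF j] by auto
  have a2: "\<bar>f (x + ?h) - f x - g' j * s\<bar> \<le> e * s" using r2(2) hR hn s vinner_ej[OF j] by auto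
  have "\<bar>g j - g' j\<bar> * s \<le> 2 * e * s"
  proof -
    have "\<bar>(f (x + ?h) - f x - g' j * s) - (f (x + ?h) - f x - g j * s)\<bar> = \<bar>(g j - g' j) * s\<bar>"
      by (simp add: algebra_simps)
    also have "\<dots> = \<bar>g j - g' j\<bar> * s" using s by (simp add: abs_mult)
    finally have "\<bar>g j - g' j\<bar> * s = \<bar>(f (x + ?h) - f x - g' j * s) - (f (x + ?h) - f x - g j * s)\<bar>" by simp
    also have "\<dots> \<le> 2 * e * s" using a1 a2 by linarith
    finally show ?thesis .
  qed
  then show "\<bar>g j - g' j\<bar> \<le> 2 * e" using s by simp
qed

lemma has_jac_unique:
  assumes H: "has_jac d G H x" and H': "has_jac d G H' x" and i: "i < d" and j: "j < d"
  shows "H i j = H' i j"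
proof (rule small_all_eq)
  fix e :: real assume e: "e > 0"
  obtain r1 where r1: "r1 > 0" "\<forall>h\<in>Rd d. vnorm d h < r1 \<longrightarrow> vnorm d (G (x + h) - G x - mv d H h) \<le> e * vnorm d h"
    using H e unfolding has_jac_def by blast
  obtain r2 where r2: "r2 > 0" "\<forall>h\<in>Rd d. vnorm d h < r2 \<longrightarrow> vnorm d (G (x + h) - G x - mv d H' h) \<le> e * vnorm d h"
    using H' e unfolding has_jac_def by blast
  define s where "s = min r1 r2 / 2"
  have s: "s > 0" "s < r1" "s < r2" unfolding s_def using r1 r2 by auto
  let ?h = "ej j s"
  have hR: "?h \<in> Rd d" by (rule ej_Rd[OF j])
  have hn: "vnorm d ?h = s" using vnorm_ej[OF j] s by simp
  have a1: "\<bar>(G (x + ?h) - G x - mv d H ?h) i\<bar> \<le> e * s"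
    using r1(2) hR hn s coord_le_vnorm[OF i, of "G (x + ?h) - G x - mv d H ?h"] by auto
  have a2: "\<bar>(G (x + ?h) - G x - mv d H' ?h) i\<bar> \<le> e * s"
    using r2(2) hR hn s coord_le_vnorm[OF i, of "G (x + ?h) - G x - mv d H' ?h"] by auto
  have "\<bar>H i j - H' i j\<bar> * s \<le> 2 * e * s"
  proof -
    have "\<bar>(G (x + ?h) - G x - mv d H' ?h) i - (G (x + ?h) - G x - mv d H ?h) i\<bar> = \<bar>(H i j - H' i j) * s\<bar>"
      by (simp add: mv_ej[OF i j] algebra_simps)
    also have "\<dots> = \<bar>H i j - H' i j\<bar> * s" using s by (simp add: abs_mult)
    finally have "\<bar>H i j - H' i j\<bar> * s = \<bar>(G (x + ?h) - G x - mv d H' ?h) i - (G (x + ?h) - G x - mv d H ?h) i\<bar>" by simp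
    also have "\<dots> \<le> 2 * e * s" using a1 a2 by linarith
    finally show ?thesis .
  qed
  then show "\<bar>H i j - H' i j\<bar> \<le> 2 * e" using s by simp
qed

lemma grad_eq: "has_grad d f g x \<Longrightarrow> j < d \<Longrightarrow> grad d f x j = g j"
proof -
  assume g: "has_grad d f g x" and j: "j < d"
  have "has_grad d f (SOME g. has_grad d f g x) x" using g by (rule someI[where P="\<lambda>g. has_grad d f g x"])
  then show ?thesis unfolding grad_def using j has_grad_unique[OF _ g j] by simp
qed

lemma grad_out: "j \<ge> d \<Longrightarrow> grad d f x j = 0" unfolding grad_def by simp

lemma vinner_cong: "(\<And>j. j < d \<Longrightarrow> g j = g' j) \<Longrightarrow> vinner d g h = vinner d g' h"
  unfolding vinner_def by simp

lemma has_grad_cong: "(\<And>j. j < d \<Longrightarrow> g j = g' j) \<Longrightarrow> has_grad d f g x \<Longrightarrow> has_grad d f g' x"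
  unfolding has_grad_def using vinner_cong by metis

lemma has_grad_grad: "has_grad d f g x \<Longrightarrow> has_grad d f (grad d f x) x"
  by (rule has_grad_cong[of d g]) (auto simp: grad_eq)

lemma has_jac_cong: "meq d H H' \<Longrightarrow> has_jac d G H x \<Longrightarrow> has_jac d G H' x"
proof -
  assume m: "meq d H H'" and j: "has_jac d G H x"
  have "mv d H h = mv d H' h" for h by (rule mv_cong[OF m]) simp
  then show ?thesis using j unfolding has_jac_def by simp
qed

lemma hess_jac: "has_jac d (grad d f) H x \<Longrightarrow> has_jac d (grad d f) (hess d f x) x"
  unfolding hess_def by (rule someI[where P="\<lambda>H. has_jac d (grad d f) H x"])

lemma hess_eq: "has_jac d (grad d f) H x \<Longrightarrow> meq d (hess d f x) H"
  unfolding meq_def using has_jac_unique[OF hess_jac] by blast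

lemma has_jac_cong_fun:
  assumes x: "x \<in> Rd d" and eq: "\<And>y. y \<in> Rd d \<Longrightarrow> G y = G' y" and j: "has_jac d G H x"
  shows "has_jac d G' H x"
proof -
  have "h \<in> Rd d \<Longrightarrow> x + h \<in> Rd d" for h using x unfolding Rd_def by auto
  then show ?thesis using j eq x unfolding has_jac_def by metis
qed

lemma vnorm_add_diff: "vnorm d (a + b) \<le> vnorm d a + vnorm d b" by (rule vnorm_triangle)

lemma has_grad_add:
  assumes "has_grad d f g x" "has_grad d f' g' x"
  shows "has_grad d (\<lambda>y. f y + f' y) (g + g') x"
  unfolding has_grad_def
proof (intro allI impI)
  fix e :: real assume e: "e > 0"
  obtain r1 where r1: "r1 > 0" "\<forall>h\<in>Rd d. vnorm d h < r1 \<longrightarrow> \<bar>f (x + h) - f x - vinner d g h\<bar> \<le> e/2 * vnorm d h"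
    using assms(1) e unfolding has_grad_def by (meson half_gt_zero)
  obtain r2 where r2: "r2 > 0" "\<forall>h\<in>Rd d. vnorm d h < r2 \<longrightarrow> \<bar>f' (x + h) - f' x - vinner d g' h\<bar> \<le> e/2 * vnorm d h"
    using assms(2) e unfolding has_grad_def by (meson half_gt_zero)
  have vi: "vinner d (g + g') h = vinner d g h + vinner d g' h" for h
    unfolding vinner_def by (simp add: sum.distrib algebra_simps)
  show "\<exists>r>0. \<forall>h\<in>Rd d. vnorm d h < r \<longrightarrow> \<bar>f (x + h) + f' (x + h) - (f x + f' x) - vinner d (g + g') h\<bar> \<le> e * vnorm d h"
  proof (intro exI[of _ "min r1 r2"] conjI ballI impI)
    show "min r1 r2 > 0" using r1 r2 by simp
    fix h assume h: "h \<in> Rd d" "vnorm d h < min r1 r2"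
    then have "\<bar>f (x + h) - f x - vinner d g h\<bar> \<le> e/2 * vnorm d h" "\<bar>f' (x + h) - f' x - vinner d g' h\<bar> \<le> e/2 * vnorm d h"
      using r1 r2 by auto
    then show "\<bar>f (x + h) + f' (x + h) - (f x + f' x) - vinner d (g + g') h\<bar> \<le> e * vnorm d h"
      unfolding vi by linarith
  qed
qed

lemma has_grad_scale:
  assumes "has_grad d f g x"
  shows "has_grad d (\<lambda>y. c * f y) (\<lambda>j. c * g j) x"
  unfolding has_grad_def
proof (intro allI impI)
  fix e :: real assume e: "e > 0"
  obtain r where r: "r > 0" "\<forall>h\<in>Rd d. vnorm d h < r \<longrightarrow> \<bar>f (x + h) - f x - vinner d g h\<bar> \<le> e / (\<bar>c\<bar> + 1) * vnorm d h"
    using assms e unfolding has_grad_def by (metis divide_pos_pos abs_ge_zero add_nonneg_pos zero_less_one)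
  have vi: "vinner d (\<lambda>j. c * g j) h = c * vinner d g h" for h
    unfolding vinner_def by (simp add: sum_distrib_left ac_simps)
  show "\<exists>r>0. \<forall>h\<in>Rd d. vnorm d h < r \<longrightarrow> \<bar>c * f (x + h) - c * f x - vinner d (\<lambda>j. c * g j) h\<bar> \<le> e * vnorm d h"
  proof (intro exI[of _ r] conjI ballI impI)
    show "r > 0" by (rule r(1))
    fix h assume h: "h \<in> Rd d" "vnorm d h < r"
    have "\<bar>c * f (x + h) - c * f x - vinner d (\<lambda>j. c * g j) h\<bar> = \<bar>c\<bar> * \<bar>f (x + h) - f x - vinner d g h\<bar>"
      unfolding vi by (simp add: abs_mult[symmetric] algebra_simps)
    also have "\<dots> \<le> \<bar>c\<bar> * (e / (\<bar>c\<bar> + 1) * vnorm d h)" using r h by (intro mult_left_mono) auto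
    also have "\<dots> \<le> e * vnorm d h"
    proof -
      have "\<bar>c\<bar> / (\<bar>c\<bar> + 1) \<le> 1" by simp
      then have "\<bar>c\<bar> / (\<bar>c\<bar> + 1) * (e * vnorm d h) \<le> 1 * (e * vnorm d h)"
        using e by (intro mult_right_mono) auto
      then show ?thesis by simp
    qed
    finally show "\<bar>c * f (x + h) - c * f x - vinner d (\<lambda>j. c * g j) h\<bar> \<le> e * vnorm d h" .
  qed
qed

lemma has_grad_zero: "has_grad d (\<lambda>y. 0) (\<lambda>j. 0) x"
  unfolding has_grad_def vinner_def by (auto intro: exI[of _ 1])

lemma has_grad_sum:
  fixes m :: nat
  assumes "\<And>k. k < m \<Longrightarrow> has_grad d (F k) (g k) x"
  shows "has_grad d (\<lambda>y. \<Sum>k<m. F k y) (\<lambda>j. \<Sum>k<m. g k j) x"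
  using assms
proof (induction m)
  case 0 then show ?case by (simp add: has_grad_zero)
next
  case (Suc m)
  have "has_grad d (\<lambda>y. (\<Sum>k<m. F k y) + F m y) ((\<lambda>j. \<Sum>k<m. g k j) + g m) x"
    using Suc by (intro has_grad_add) auto
  then show ?case by (simp add: plus_fun_def)
qed

lemma has_grad_avg:
  assumes "\<And>k. k < m \<Longrightarrow> has_grad d (F k) (g k) x"
  shows "has_grad d (\<lambda>y. (\<Sum>k<m. F k y) / real m) (\<lambda>j. (\<Sum>k<m. g k j) / real m) x"
  using has_grad_scale[OF has_grad_sum[OF assms], where c="1 / real m"] by simp

lemma has_jac_add:
  assumes "has_jac d G H x" "has_jac d G' H' x"
  shows "has_jac d (\<lambda>y. G y + G' y) (H + H') x"
  unfolding has_jac_def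
proof (intro allI impI)
  fix e :: real assume e: "e > 0"
  obtain r1 where r1: "r1 > 0" "\<forall>h\<in>Rd d. vnorm d h < r1 \<longrightarrow> vnorm d (G (x + h) - G x - mv d H h) \<le> e/2 * vnorm d h"
    using assms(1) e unfolding has_jac_def by (meson half_gt_zero)
  obtain r2 where r2: "r2 > 0" "\<forall>h\<in>Rd d. vnorm d h < r2 \<longrightarrow> vnorm d (G' (x + h) - G' x - mv d H' h) \<le> e/2 * vnorm d h"
    using assms(2) e unfolding has_jac_def by (meson half_gt_zero)
  show "\<exists>r>0. \<forall>h\<in>Rd d. vnorm d h < r \<longrightarrow> vnorm d (G (x + h) + G' (x + h) - (G x + G' x) - mv d (H + H') h) \<le> e * vnorm d h"
  proof (intro exI[of _ "min r1 r2"] conjI ballI impI)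
    show "min r1 r2 > 0" using r1 r2 by simp
    fix h assume h: "h \<in> Rd d" "vnorm d h < min r1 r2"
    then have a: "vnorm d (G (x + h) - G x - mv d H h) \<le> e/2 * vnorm d h" "vnorm d (G' (x + h) - G' x - mv d H' h) \<le> e/2 * vnorm d h"
      using r1 r2 by auto
    have E: "G (x + h) + G' (x + h) - (G x + G' x) - mv d (H + H') h = (G (x + h) - G x - mv d H h) + (G' (x + h) - G' x - mv d H' h)"
      by (simp add: mv_add algebra_simps)
    have "vnorm d (G (x + h) + G' (x + h) - (G x + G' x) - mv d (H + H') h) \<le> vnorm d (G (x + h) - G x - mv d H h) + vnorm d (G' (x + h) - G' x - mv d H' h)"
      unfolding E by (rule vnorm_triangle)
    then show "vnorm d (G (x + h) + G' (x + h) - (G x + G' x) - mv d (H + H') h) \<le> e * vnorm d h"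
      using a by linarith
  qed
qed

lemma has_jac_scale:
  assumes "has_jac d G H x"
  shows "has_jac d (\<lambda>y j. c * G y j) (\<lambda>i j. c * H i j) x"
  unfolding has_jac_def
proof (intro allI impI)
  fix e :: real assume e: "e > 0"
  obtain r where r: "r > 0" "\<forall>h\<in>Rd d. vnorm d h < r \<longrightarrow> vnorm d (G (x + h) - G x - mv d H h) \<le> e / (\<bar>c\<bar> + 1) * vnorm d h"
    using assms e unfolding has_jac_def by (metis divide_pos_pos abs_ge_zero add_nonneg_pos zero_less_one)
  have mvs: "mv d (\<lambda>i j. c * H i j) h = (\<lambda>i. c * mv d H h i)" for h
    unfolding mv_def by (auto simp: sum_distrib_left ac_simps)
  show "\<exists>r>0. \<forall>h\<in>Rd d. vnorm d h < r \<longrightarrow> vnorm d ((\<lambda>j. c * G (x + h) j) - (\<lambda>j. c * G x j) - mv d (\<lambda>i j. c * H i j) h) \<le> e * vnorm d h"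
  proof (intro exI[of _ r] conjI ballI impI)
    show "r > 0" by (rule r(1))
    fix h assume h: "h \<in> Rd d" "vnorm d h < r"
    have "(\<lambda>j. c * G (x + h) j) - (\<lambda>j. c * G x j) - mv d (\<lambda>i j. c * H i j) h = (\<lambda>j. c * (G (x + h) - G x - mv d H h) j)"
      unfolding mvs by (simp add: fun_eq_iff algebra_simps)
    then have "vnorm d ((\<lambda>j. c * G (x + h) j) - (\<lambda>j. c * G x j) - mv d (\<lambda>i j. c * H i j) h) = \<bar>c\<bar> * vnorm d (G (x + h) - G x - mv d H h)"
      by (simp add: vnorm_scale fun_diff_def)
    also have "\<dots> \<le> \<bar>c\<bar> * (e / (\<bar>c\<bar> + 1) * vnorm d h)" using r h by (intro mult_left_mono) auto
    also have "\<dots> \<le> e * vnorm d h"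
    proof -
      have "\<bar>c\<bar> / (\<bar>c\<bar> + 1) \<le> 1" by simp
      then have "\<bar>c\<bar> / (\<bar>c\<bar> + 1) * (e * vnorm d h) \<le> 1 * (e * vnorm d h)"
        using e by (intro mult_right_mono) auto
      then show ?thesis by simp
    qed
    finally show "vnorm d ((\<lambda>j. c * G (x + h) j) - (\<lambda>j. c * G x j) - mv d (\<lambda>i j. c * H i j) h) \<le> e * vnorm d h" .
  qed
qed

lemma has_jac_zero: "has_jac d (\<lambda>y j. 0) (\<lambda>i j. 0) x"
  unfolding has_jac_def by (auto intro!: exI[of _ 1] simp: mv_def vnorm_def fun_diff_def sum_nonneg)

lemma has_jac_sum:
  fixes m :: nat
  assumes "\<And>k. k < m \<Longrightarrow> has_jac d (G k) (H k) x"
  shows "has_jac d (\<lambda>y j. \<Sum>k<m. G k y j) (\<lambda>i j. \<Sum>k<m. H k i j) x"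
  using assms
proof (induction m)
  case 0 then show ?case by (simp add: has_jac_zero)
next
  case (Suc m)
  have "has_jac d (\<lambda>y. (\<lambda>j. \<Sum>k<m. G k y j) + G m y) ((\<lambda>i j. \<Sum>k<m. H k i j) + H m) x"
    using Suc by (intro has_jac_add) auto
  then show ?case by (simp add: plus_fun_def)
qed

lemma has_jac_avg:
  assumes "\<And>k. k < m \<Longrightarrow> has_jac d (G k) (H k) x"
  shows "has_jac d (\<lambda>y j. (\<Sum>k<m. G k y j) / real m) (\<lambda>i j. (\<Sum>k<m. H k i j) / real m) x"
  using has_jac_scale[OF has_jac_sum[OF assms], where c="1 / real m"] by simp

lemma deriv_from_bound:
  assumes "\<And>e. e > 0 \<Longrightarrow> \<exists>r>0. \<forall>s. s \<noteq> 0 \<and> \<bar>s\<bar> < r \<longrightarrow> \<bar>\<phi> (t + s) - \<phi> t - s * D\<bar> \<le> e * \<bar>s\<bar>"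
  shows "(\<phi> has_real_derivative D) (at t)"
  unfolding DERIV_def LIM_eq
proof (intro allI impI)
  fix r :: real assume r: "r > 0"
  obtain q where q: "q > 0" "\<forall>s. s \<noteq> 0 \<and> \<bar>s\<bar> < q \<longrightarrow> \<bar>\<phi> (t + s) - \<phi> t - s * D\<bar> \<le> r/2 * \<bar>s\<bar>"
    using assms[of "r/2"] r by auto
  show "\<exists>s>0. \<forall>x. x \<noteq> 0 \<and> norm (x - 0) < s \<longrightarrow> norm ((\<phi> (t + x) - \<phi> t) / x - D) < r"
  proof (intro exI[of _ q] conjI allI impI)
    show "q > 0" by (rule q(1))
    fix x :: real assume x: "x \<noteq> 0 \<and> norm (x - 0) < q"
    then have b: "\<bar>\<phi> (t + x) - \<phi> t - x * D\<bar> \<le> r/2 * \<bar>x\<bar>" using q by auto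
    have "(\<phi> (t + x) - \<phi> t) / x - D = (\<phi> (t + x) - \<phi> t - x * D) / x" using x by (simp add: field_simps)
    then have "norm ((\<phi> (t + x) - \<phi> t) / x - D) = \<bar>\<phi> (t + x) - \<phi> t - x * D\<bar> / \<bar>x\<bar>" by (simp add: abs_divide)
    also have "\<dots> \<le> r/2" using b x by (simp add: divide_le_eq)
    also have "\<dots> < r" using r by simp
    finally show "norm ((\<phi> (t + x) - \<phi> t) / x - D) < r" .
  qed
qed

lemma vinner_diff: "vinner d u (a - b) = vinner d u a - vinner d u b"
  unfolding vinner_def by (simp add: sum_subtractf algebra_simps)
lemma vinner_add: "vinner d u (a + b) = vinner d u a + vinner d u b"
  unfolding vinner_def by (simp add: sum.distrib algebra_simps)
lemma vinner_scale: "vinner d u (\<lambda>j. s * w j) = s * vinner d u w"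
  unfolding vinner_def by (simp add: sum_distrib_left ac_simps)
lemma mv_scale_vec: "mv d H (\<lambda>j. s * v j) = (\<lambda>i. s * mv d H v i)"
  unfolding mv_def by (auto intro!: ext simp: sum_distrib_left ac_simps)

lemma taylor:
  assumes td: "twice_diff d f" and lh: "lipschitz_hess d L f" and x: "x \<in> Rd d" and xt: "xt \<in> Rd d"
  shows "vnorm d (grad d f x - grad d f xt - mv d (hess d f xt) (x - xt)) \<le> L * (vnorm d (x - xt))^2"
proof -
  define v where "v = x - xt"
  define H0 where "H0 = hess d f xt"
  define u where "u = grad d f x - grad d f xt - mv d H0 v"
  define p where "p t = (\<lambda>j. xt j + t * v j)" for t :: real
  have pR: "p t \<in> Rd d" for t using x xt unfolding p_def v_def Rd_def by auto
  have p0: "p 0 = xt" unfolding p_def by simp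
  have p1: "p 1 = x" unfolding p_def v_def by (simp add: fun_eq_iff)
  have HJ: "has_jac d (grad d f) (hess d f y) y" if "y \<in> Rd d" for y
    using td that unfolding twice_diff_def by (meson hess_jac)
  have Lv: "0 \<le> L * vnorm d v"
    using lh x xt unfolding lipschitz_hess_def v_def by (meson order_trans specnorm_nonneg)
  define \<phi> where "\<phi> t = vinner d u (grad d f (p t)) - t * vinner d u (mv d H0 v)" for t
  define D where "D t = vinner d u (mv d (hess d f (p t)) v) - vinner d u (mv d H0 v)" for t
  have deriv: "(\<phi> has_real_derivative D t) (at t)" for t
  proof (rule deriv_from_bound)
    fix e :: real assume e: "e > 0"
    let ?e' = "e / ((vnorm d u + 1) * (vnorm d v + 1))"
    have p1: "vnorm d u + 1 > 0" "vnorm d v + 1 > 0" by (simp_all add: add_nonneg_pos)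
    have e': "?e' > 0" using e p1 by (intro divide_pos_pos mult_pos_pos)
    obtain r where r: "r > 0" "\<forall>h\<in>Rd d. vnorm d h < r \<longrightarrow> vnorm d (grad d f (p t + h) - grad d f (p t) - mv d (hess d f (p t)) h) \<le> ?e' * vnorm d h"
      using HJ[OF pR[of t]] e' unfolding has_jac_def by blast
    show "\<exists>r>0. \<forall>s. s \<noteq> 0 \<and> \<bar>s\<bar> < r \<longrightarrow> \<bar>\<phi> (t + s) - \<phi> t - s * D t\<bar> \<le> e * \<bar>s\<bar>"
    proof (intro exI[of _ "r / (vnorm d v + 1)"] conjI allI impI)
      show "r / (vnorm d v + 1) > 0" using r by (simp add: add_nonneg_pos)
      fix s :: real assume s: "s \<noteq> 0 \<and> \<bar>s\<bar> < r / (vnorm d v + 1)"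
      define h where "h = (\<lambda>j. s * v j)"
      have hR: "h \<in> Rd d" using x xt unfolding h_def v_def Rd_def by auto
      have hn: "vnorm d h = \<bar>s\<bar> * vnorm d v" unfolding h_def by (rule vnorm_scale)
      have "\<bar>s\<bar> * vnorm d v \<le> \<bar>s\<bar> * (vnorm d v + 1)" by (simp add: mult_left_mono)
      also have "\<dots> < r" using s by (simp add: pos_less_divide_eq[symmetric] add_nonneg_pos mult.commute)
      finally have hr: "vnorm d h < r" using hn by simp
      have pts: "p (t + s) = p t + h" unfolding p_def h_def by (simp add: fun_eq_iff algebra_simps)
      let ?w = "grad d f (p t + h) - grad d f (p t) - mv d (hess d f (p t)) h"
      have A: "vinner d u (mv d (hess d f (p t)) h) = s * vinner d u (mv d (hess d f (p t)) v)"
        unfolding h_def mv_scale_vec by (rule vinner_scale)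
      have B: "vinner d u ?w = vinner d u (grad d f (p t + h)) - vinner d u (grad d f (p t)) - vinner d u (mv d (hess d f (p t)) h)"
        by (simp only: vinner_diff)
      have "\<phi> (t + s) - \<phi> t - s * D t = vinner d u ?w"
        unfolding B A \<phi>_def D_def pts by (simp add: algebra_simps)
      then have "\<bar>\<phi> (t + s) - \<phi> t - s * D t\<bar> \<le> vnorm d u * vnorm d ?w" by (simp add: vinner_cs)
      also have "\<dots> \<le> vnorm d u * (?e' * (\<bar>s\<bar> * vnorm d v))"
        using r(2) hR hr hn by (intro mult_left_mono) auto
      also have "\<dots> \<le> e * \<bar>s\<bar>"
      proof -
        have "vnorm d u * vnorm d v \<le> (vnorm d u + 1) * (vnorm d v + 1)"
          by (intro mult_mono) auto
        moreover have pp: "(vnorm d u + 1) * (vnorm d v + 1) > 0" using p1 by simp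
        ultimately have "vnorm d u * vnorm d v / ((vnorm d u + 1) * (vnorm d v + 1)) \<le> 1"
          by (simp add: divide_le_eq_1_pos)
        then have "e * \<bar>s\<bar> * (vnorm d u * vnorm d v / ((vnorm d u + 1) * (vnorm d v + 1))) \<le> e * \<bar>s\<bar> * 1"
          using e by (intro mult_left_mono) auto
        then show ?thesis by (simp add: field_simps)
      qed
      finally show "\<bar>\<phi> (t + s) - \<phi> t - s * D t\<bar> \<le> e * \<bar>s\<bar>" .
    qed
  qed
  obtain z where z: "z > 0" "z < 1" "\<phi> 1 - \<phi> 0 = (1 - 0) * D z"
    using MVT2[of 0 1 \<phi> D] deriv by auto
  have "\<phi> 1 - \<phi> 0 = vinner d u u"
    unfolding \<phi>_def p0 p1 u_def by (simp add: vinner_diff)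
  then have uu: "(vnorm d u)^2 = D z" using z(3) by (simp add: vinner_self)
  have "D z = vinner d u (mv d (hess d f (p z) - H0) v)" unfolding D_def by (simp add: mv_diff vinner_diff)
  also have "\<dots> \<le> vnorm d u * vnorm d (mv d (hess d f (p z) - H0) v)" using vinner_cs by (rule abs_le_D1)
  also have "\<dots> \<le> vnorm d u * (specnorm d (hess d f (p z) - H0) * vnorm d v)" by (intro mult_left_mono mv_le) auto
  also have "\<dots> \<le> vnorm d u * (L * vnorm d (p z - xt) * vnorm d v)"
  proof -
    have "specnorm d (hess d f (p z) - H0) \<le> L * vnorm d (p z - xt)"
      using lh pR xt unfolding lipschitz_hess_def H0_def by blast
    then show ?thesis by (intro mult_left_mono mult_right_mono) auto
  qed
  also have "vnorm d (p z - xt) = z * vnorm d v"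
  proof -
    have "p z - xt = (\<lambda>j. z * v j)" unfolding p_def by (simp add: fun_eq_iff)
    then show ?thesis using z by (simp add: vnorm_scale)
  qed
  also have "vnorm d u * (L * (z * vnorm d v) * vnorm d v) \<le> vnorm d u * (L * vnorm d v * vnorm d v)"
  proof -
    have "L * vnorm d v * z \<le> L * vnorm d v" using Lv z by (simp add: mult_left_le)
    then have "L * (z * vnorm d v) \<le> L * vnorm d v" by (simp add: ac_simps)
    then show ?thesis by (rule mult_left_mono[OF mult_right_mono]) auto
  qed
  finally have main: "(vnorm d u)^2 \<le> vnorm d u * (L * (vnorm d v)^2)" using uu by (simp add: power2_eq_square ac_simps)
  have "vnorm d u \<le> L * (vnorm d v)^2"
  proof (cases "vnorm d u = 0")
    case True
    have "0 \<le> L * vnorm d v * vnorm d v" using Lv by simp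
    then show ?thesis using True by (simp add: power2_eq_square ac_simps)
  next
    case False
    then have "vnorm d u > 0" using vnorm_nonneg[of d u] by linarith
    then show ?thesis using main by (simp add: power2_eq_square)
  qed
  then show ?thesis unfolding u_def v_def H0_def .
qed

lemma grad_avg:
  assumes td: "\<And>k. k < m \<Longrightarrow> twice_diff d (F k)" and y: "y \<in> Rd d"
  shows "grad d (\<lambda>z. (\<Sum>k<m. F k z) / real m) y = (\<lambda>j. (\<Sum>k<m. grad d (F k) y j) / real m)"
proof -
  have hg: "has_grad d (F k) (grad d (F k) y) y" if "k < m" for k
    using td[OF that] y unfolding twice_diff_def by (meson has_grad_grad)
  have hga: "has_grad d (\<lambda>z. (\<Sum>k<m. F k z) / real m) (\<lambda>j. (\<Sum>k<m. grad d (F k) y j) / real m) y"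
    by (rule has_grad_avg) (rule hg)
  show ?thesis
  proof (rule ext)
    fix j
    show "grad d (\<lambda>z. (\<Sum>k<m. F k z) / real m) y j = (\<Sum>k<m. grad d (F k) y j) / real m"
    proof (cases "j < d")
      case True then show ?thesis using grad_eq[OF hga True] by simp
    next
      case False then show ?thesis by (simp add: grad_out)
    qed
  qed
qed

lemma hess_avg:
  assumes td: "\<And>k. k < m \<Longrightarrow> twice_diff d (F k)" and y: "y \<in> Rd d"
  shows "meq d (hess d (\<lambda>z. (\<Sum>k<m. F k z) / real m) y) (\<lambda>i j. (\<Sum>k<m. hess d (F k) y i j) / real m)"
proof -
  have hj: "has_jac d (grad d (F k)) (hess d (F k) y) y" if "k < m" for k
    using td[OF that] y unfolding twice_diff_def by (meson hess_jac)
  have hj2: "has_jac d (\<lambda>z j. (\<Sum>k<m. grad d (F k) z j) / real m) (\<lambda>i j. (\<Sum>k<m. hess d (F k) y i j) / real m) y"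
    by (rule has_jac_avg) (rule hj)
  have eqf: "(\<lambda>z j. (\<Sum>k<m. grad d (F k) z j) / real m) z = grad d (\<lambda>z. (\<Sum>k<m. F k z) / real m) z"
    if "z \<in> Rd d" for z
    using grad_avg[OF td that] by simp
  have "has_jac d (grad d (\<lambda>z. (\<Sum>k<m. F k z) / real m)) (\<lambda>i j. (\<Sum>k<m. hess d (F k) y i j) / real m) y"
    by (rule has_jac_cong_fun[where G="\<lambda>z j. (\<Sum>k<m. grad d (F k) z j) / real m", OF y eqf hj2])
  then show ?thesis by (rule hess_eq)
qed

lemma mv_avg: "mv d (\<lambda>i j. (\<Sum>k<m. H k i j) / real m) v = (\<lambda>i. (\<Sum>k<m. mv d (H k) v i) / real m)"
proof (rule ext)
  fix i
  show "mv d (\<lambda>i j. (\<Sum>k<m. H k i j) / real m) v i = (\<Sum>k<m. mv d (H k) v i) / real m"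
  proof (cases "i < d")
    case True
    have "(\<Sum>j<d. (\<Sum>k<m. H k i j) / real m * v j) = (\<Sum>j<d. (\<Sum>k<m. H k i j * v j) / real m)"
      by (intro sum.cong refl) (simp add: sum_distrib_right)
    also have "\<dots> = (\<Sum>j<d. \<Sum>k<m. H k i j * v j) / real m" by (rule sum_divide_distrib[symmetric])
    also have "\<dots> = (\<Sum>k<m. \<Sum>j<d. H k i j * v j) / real m" by (subst sum.swap) (rule refl)
    finally have "(\<Sum>j<d. (\<Sum>k<m. H k i j) / real m * v j) = (\<Sum>k<m. \<Sum>j<d. H k i j * v j) / real m" .
    then show ?thesis using True unfolding mv_def by simp
  next
    case False then show ?thesis unfolding mv_def by simp
  qed
qed

lemma specnorm_sum: "specnorm d (\<Sum>c\<in>C. A c) \<le> (\<Sum>c\<in>C. specnorm d (A c))"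
proof (induction C rule: infinite_finite_induct)
  case (infinite C) then show ?case by (simp add: specnorm_zero meq_def)
next
  case empty then show ?case by (simp add: specnorm_zero meq_def)
next
  case (insert c C)
  have "specnorm d (\<Sum>c\<in>insert c C. A c) = specnorm d (A c + (\<Sum>c\<in>C. A c))"
    by (simp only: sum.insert[OF insert(1,2)])
  also have "\<dots> \<le> specnorm d (A c) + specnorm d (\<Sum>c\<in>C. A c)" by (rule specnorm_triangle)
  also have "\<dots> \<le> specnorm d (A c) + (\<Sum>c\<in>C. specnorm d (A c))" using insert(3) by simp
  also have "\<dots> = (\<Sum>c\<in>insert c C. specnorm d (A c))" using insert(1,2) by simp
  finally show ?case .
qed

lemma batches_mem: "B \<in> batches n b \<Longrightarrow> k < b \<Longrightarrow> B k < n"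
  unfolding batches_def by auto

lemma mv_cong_mat: "meq d A B \<Longrightarrow> mv d A v = mv d B v"
  by (rule mv_cong) auto

lemma part1_key:
  fixes fs :: "nat \<Rightarrow> vec \<Rightarrow> real"
  assumes b: "b \<ge> 1" and tdi: "\<And>i. i < n \<Longrightarrow> twice_diff d (fs i)"
    and x: "x \<in> Rd d" and xt: "xt \<in> Rd d" and B: "B \<in> batches n b" and j: "j < d"
  defines "a \<equiv> \<lambda>i. grad d (fs i) x - grad d (fs i) xt - mv d (hess d (fs i) xt) (x - xt)"
  shows "(calG d (favg n fs) (hB b fs B) x xt - grad d (favg n fs) x) j
       = (\<Sum>k<b. a (B k) j - (\<Sum>i<n. a i j) / real n) / real b"
proof -
  let ?v = "x - xt"
  have tdB: "twice_diff d (fs (B k))" if "k < b" for k using tdi batches_mem[OF B that] by blast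
  have fdef: "favg n fs = (\<lambda>y. (\<Sum>i<n. fs i y) / real n)" unfolding favg_def ..
  have hdef: "hB b fs B = (\<lambda>y. (\<Sum>k<b. fs (B k) y) / real b)" unfolding hB_def ..
  have gf: "grad d (favg n fs) y = (\<lambda>j. (\<Sum>i<n. grad d (fs i) y j) / real n)" if "y \<in> Rd d" for y
    unfolding fdef by (rule grad_avg[where F=fs and m=n, OF tdi that])
  have gh: "grad d (hB b fs B) y = (\<lambda>j. (\<Sum>k<b. grad d (fs (B k)) y j) / real b)" if "y \<in> Rd d" for y
    unfolding hdef by (rule grad_avg[where F="\<lambda>k. fs (B k)" and m=b, OF tdB that])
  have mf: "mv d (hess d (favg n fs) xt) ?v = (\<lambda>i. (\<Sum>c<n. mv d (hess d (fs c) xt) ?v i) / real n)"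
  proof -
    have "mv d (hess d (favg n fs) xt) ?v = mv d (\<lambda>i j. (\<Sum>c<n. hess d (fs c) xt i j) / real n) ?v"
      unfolding fdef by (rule mv_cong_mat[OF hess_avg[where F=fs and m=n, OF tdi xt]])
    then show ?thesis by (simp add: mv_avg)
  qed
  have mh: "mv d (hess d (hB b fs B) xt) ?v = (\<lambda>i. (\<Sum>k<b. mv d (hess d (fs (B k)) xt) ?v i) / real b)"
  proof -
    have "mv d (hess d (hB b fs B) xt) ?v = mv d (\<lambda>i j. (\<Sum>k<b. hess d (fs (B k)) xt i j) / real b) ?v"
      unfolding hdef by (rule mv_cong_mat[OF hess_avg[where F="\<lambda>k. fs (B k)" and m=b, OF tdB xt]])
    then show ?thesis by (simp add: mv_avg)
  qed
  have bp: "real b > 0" using b by simp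
  have "(calG d (favg n fs) (hB b fs B) x xt - grad d (favg n fs) x) j
      = (\<Sum>k<b. grad d (fs (B k)) x j) / real b - (\<Sum>k<b. grad d (fs (B k)) xt j) / real b
        + (\<Sum>i<n. grad d (fs i) xt j) / real n
        + ((\<Sum>c<n. mv d (hess d (fs c) xt) ?v j) / real n - (\<Sum>k<b. mv d (hess d (fs (B k)) xt) ?v j) / real b)
        - (\<Sum>i<n. grad d (fs i) x j) / real n"
    unfolding calG_def by (simp add: gf[OF x] gf[OF xt] gh[OF x] gh[OF xt] mv_diff mf mh)
  also have "\<dots> = (\<Sum>k<b. a (B k) j) / real b - (\<Sum>i<n. a i j) / real n"
    unfolding a_def by (simp add: sum_subtractf diff_divide_distrib)
  also have "\<dots> = (\<Sum>k<b. a (B k) j - (\<Sum>i<n. a i j) / real n) / real b"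
    using bp by (simp add: sum_subtractf diff_divide_distrib)
  finally show ?thesis .
qed

lemma part2_key:
  fixes fs :: "nat \<Rightarrow> vec \<Rightarrow> real"
  assumes b: "b \<ge> 1" and tdi: "\<And>i. i < n \<Longrightarrow> twice_diff d (fs i)"
    and x: "x \<in> Rd d" and xt: "xt \<in> Rd d" and B: "B \<in> batches n b"
  defines "M \<equiv> \<lambda>c. hess d (fs c) x - hess d (fs c) xt"
  defines "Y \<equiv> \<lambda>c i j. M c i j - (\<Sum>c<n. M c i j) / real n"
  shows "meq d (calH d (favg n fs) (hB b fs B) x xt - hess d (favg n fs) x) (\<lambda>i j. (1 / real b) * Ssum Y b B i j)"
  unfolding meq_def
proof (intro allI impI)
  fix i j assume i: "i < d" and j: "j < d"
  have tdB: "twice_diff d (fs (B k))" if "k < b" for k using tdi batches_mem[OF B that] by blast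
  have fdef: "favg n fs = (\<lambda>y. (\<Sum>i<n. fs i y) / real n)" unfolding favg_def ..
  have hdef: "hB b fs B = (\<lambda>y. (\<Sum>k<b. fs (B k) y) / real b)" unfolding hB_def ..
  have hf: "hess d (favg n fs) y i j = (\<Sum>c<n. hess d (fs c) y i j) / real n" if "y \<in> Rd d" for y
  proof -
    have hm: "meq d (hess d (\<lambda>y. (\<Sum>i<n. fs i y) / real n) y) (\<lambda>i j. (\<Sum>k<n. hess d (fs k) y i j) / real n)"
      by (rule hess_avg) (auto intro: tdi that)
    show ?thesis unfolding fdef using hm i j unfolding meq_def by blast
  qed
  have hh: "hess d (hB b fs B) y i j = (\<Sum>k<b. hess d (fs (B k)) y i j) / real b" if "y \<in> Rd d" for y
  proof -
    have hm: "meq d (hess d (\<lambda>y. (\<Sum>k<b. fs (B k) y) / real b) y) (\<lambda>i j. (\<Sum>k<b. hess d (fs (B k)) y i j) / real b)"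
      by (rule hess_avg) (auto intro: tdB that)
    show ?thesis unfolding hdef using hm i j unfolding meq_def by blast
  qed
  have bp: "real b > 0" using b by simp
  have "(calH d (favg n fs) (hB b fs B) x xt - hess d (favg n fs) x) i j
     = (\<Sum>k<b. hess d (fs (B k)) x i j) / real b - (\<Sum>k<b. hess d (fs (B k)) xt i j) / real b
       + (\<Sum>c<n. hess d (fs c) xt i j) / real n - (\<Sum>c<n. hess d (fs c) x i j) / real n"
    unfolding calH_def by (simp add: hf[OF x] hf[OF xt] hh[OF x] hh[OF xt])
  also have "\<dots> = (\<Sum>k<b. M (B k) i j) / real b - (\<Sum>c<n. M c i j) / real n"
    unfolding M_def by (simp add: sum_subtractf diff_divide_distrib)
  also have "\<dots> = (1 / real b) * (\<Sum>k<b. Y (B k) i j)"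
    unfolding Y_def using bp by (simp add: sum_subtractf diff_divide_distrib)
  also have "(\<Sum>k<b. Y (B k) i j) = Ssum Y b B i j"
    unfolding Ssum_def by (simp add: msum_apply)
  finally show "(calH d (favg n fs) (hB b fs B) x xt - hess d (favg n fs) x) i j = (1 / real b) * Ssum Y b B i j" .
qed

lemma part1:
  fixes fs :: "nat \<Rightarrow> vec \<Rightarrow> real"
  assumes n: "n \<ge> 1" and b: "b \<ge> 1" and hyp: "\<forall>i<n. twice_diff d (fs i) \<and> lipschitz_hess d L (fs i)"
    and x: "x \<in> Rd d" and xt: "xt \<in> Rd d" and L0: "L \<ge> 0"
  shows "EB n b (\<lambda>B. vnorm d (calG d (favg n fs) (hB b fs B) x xt - grad d (favg n fs) x) powr (3/2))
         \<le> (L / sqrt (real b)) powr (3/2) * vnorm d (x - xt) ^ 3"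
proof -
  have tdi: "\<And>i. i < n \<Longrightarrow> twice_diff d (fs i)" using hyp by blast
  have lhi: "\<And>i. i < n \<Longrightarrow> lipschitz_hess d L (fs i)" using hyp by blast
  define a where "a = (\<lambda>i. grad d (fs i) x - grad d (fs i) xt - mv d (hess d (fs i) xt) (x - xt))"
  define z where "z = (\<lambda>c j. a c j - (\<Sum>i<n. a i j) / real n)"
  let ?r = "vnorm d (x - xt)"
  have np: "0 < n" using n by simp
  have key: "vnorm d (calG d (favg n fs) (hB b fs B) x xt - grad d (favg n fs) x)
           = vnorm d (\<lambda>j. (\<Sum>k<b. z (B k) j) / real b)" if B: "B \<in> batches n b" for B
  proof (rule vnorm_cong)
    fix j assume j: "j < d"
    show "(calG d (favg n fs) (hB b fs B) x xt - grad d (favg n fs) x) j = (\<Sum>k<b. z (B k) j) / real b"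
      using part1_key[where fs=fs and n=n, OF b tdi x xt B j] unfolding z_def a_def .
  qed
  have abd: "vnorm d (a i) \<le> L * ?r^2" if "i < n" for i
    unfolding a_def by (rule taylor[OF tdi[OF that] lhi[OF that] x xt])
  have Z0: "(\<Sum>c<n. z c j) = 0" for j
    unfolding z_def using np by (simp add: sum_subtractf)
  have K: "(\<Sum>c<n. (vnorm d (z c))^2) \<le> real n * (L * ?r^2)^2"
  proof -
    have "(\<Sum>c<n. (vnorm d (z c))^2) = (\<Sum>j<d. \<Sum>c<n. (a c j - (\<Sum>i<n. a i j) / real n)^2)"
      unfolding vnorm_sq z_def by (rule sum.swap)
    also have "\<dots> \<le> (\<Sum>j<d. \<Sum>c<n. (a c j)^2)"
      by (intro sum_mono centered_sq_le[OF np])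
    also have "\<dots> = (\<Sum>c<n. (vnorm d (a c))^2)"
      unfolding vnorm_sq by (rule sum.swap)
    also have "\<dots> \<le> (\<Sum>c<n. (L * ?r^2)^2)"
      by (intro sum_mono power_mono abd) auto
    finally show ?thesis by simp
  qed
  have K0: "L * ?r^2 \<ge> 0" using L0 by simp
  have "EB n b (\<lambda>B. vnorm d (calG d (favg n fs) (hB b fs B) x xt - grad d (favg n fs) x) powr (3/2))
      = EB n b (\<lambda>B. vnorm d (\<lambda>j. (\<Sum>k<b. z (B k) j) / real b) powr (3/2))"
    by (intro EB_cong) (simp add: key)
  also have "\<dots> \<le> (L * ?r^2 / sqrt (real b)) powr (3/2)"
    by (rule vec_part[OF np b Z0 K K0])
  also have "(L * ?r^2 / sqrt (real b)) = (L / sqrt (real b)) * ?r^2" by simp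
  also have "((L / sqrt (real b)) * ?r^2) powr (3/2) = (L / sqrt (real b)) powr (3/2) * (?r^2) powr (3/2)"
    by (rule powr_mult)
  also have "(?r^2) powr (3/2) = ?r^3"
    by (simp add: powr_three_halves)
  finally show ?thesis .
qed

lemma final_numeric:
  fixes b :: nat and L r l :: real
  assumes b: "b \<ge> 1" and L0: "L \<ge> 0" and r0: "r \<ge> 0" and l: "l \<ge> 0"
  shows "(1 / real b)^3 * (2 * sqrt (24 * exp 2 * l * real b * (2 * L * r)^2) ^ 3)
       = 16 * sqrt (24 * exp 2) ^ 3 * (sqrt l * L / sqrt (real b)) ^ 3 * r ^ 3"
proof -
  define s where "s = sqrt (real b)"
  have sp: "s > 0" unfolding s_def using b by simp
  have bs: "real b = s^2" unfolding s_def by simp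
  have "sqrt (24 * exp 2 * l * real b * (2 * L * r)^2) = sqrt (24 * exp 2) * sqrt l * s * (2 * L * r)"
    unfolding s_def using L0 r0 by (simp add: real_sqrt_mult)
  then have "(1 / real b)^3 * (2 * sqrt (24 * exp 2 * l * real b * (2 * L * r)^2) ^ 3)
      = (1 / s^2)^3 * (2 * (sqrt (24 * exp 2) * sqrt l * s * (2 * L * r)) ^ 3)" unfolding bs by simp
  also have "\<dots> = 16 * sqrt (24 * exp 2) ^ 3 * (sqrt l * L / s) ^ 3 * r ^ 3"
    using sp by (simp add: field_simps power_mult_distrib)
  finally show ?thesis unfolding s_def .
qed

lemma part2:
  fixes fs :: "nat \<Rightarrow> vec \<Rightarrow> real"
  assumes d: "d \<ge> 2" and n: "n \<ge> 1" and b: "b \<ge> 1" and hyp: "\<forall>i<n. twice_diff d (fs i) \<and> lipschitz_hess d L (fs i)"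
    and x: "x \<in> Rd d" and xt: "xt \<in> Rd d" and L0: "L \<ge> 0"
  shows "EB n b (\<lambda>B. specnorm d (calH d (favg n fs) (hB b fs B) x xt - hess d (favg n fs) x) ^ 3)
         \<le> 16 * sqrt (24 * exp 2) ^ 3 * (sqrt (ln (real d)) * L / sqrt (real b)) ^ 3 * vnorm d (x - xt) ^ 3"
proof -
  have tdi: "\<And>i. i < n \<Longrightarrow> twice_diff d (fs i)" using hyp by blast
  have lhi: "\<And>i. i < n \<Longrightarrow> lipschitz_hess d L (fs i)" using hyp by blast
  define M where "M = (\<lambda>c. hess d (fs c) x - hess d (fs c) xt)"
  define Y where "Y = (\<lambda>c i j. M c i j - (\<Sum>c<n. M c i j) / real n)"
  let ?r = "vnorm d (x - xt)"
  have np: "0 < n" using n by simp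
  have bp: "real b > 0" using b by simp
  have key: "specnorm d (calH d (favg n fs) (hB b fs B) x xt - hess d (favg n fs) x) = (1 / real b) * specnorm d (Ssum Y b B)"
    if B: "B \<in> batches n b" for B
  proof -
    have "meq d (calH d (favg n fs) (hB b fs B) x xt - hess d (favg n fs) x) (\<lambda>i j. (1 / real b) * Ssum Y b B i j)"
      using part2_key[where fs=fs and n=n, OF b tdi x xt B] unfolding Y_def M_def .
    then have "specnorm d (calH d (favg n fs) (hB b fs B) x xt - hess d (favg n fs) x) = specnorm d (\<lambda>i j. (1 / real b) * Ssum Y b B i j)"
      by (rule specnorm_cong)
    also have "\<dots> = (1 / real b) * specnorm d (Ssum Y b B)" using specnorm_scale[of d "1 / real b" "Ssum Y b B"] bp by simp
    finally show ?thesis .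
  qed
  have Y0: "meq d (\<Sum>c<n. Y c) (\<lambda>_ _. 0)"
    unfolding meq_def Y_def using np by (simp add: msum_apply sum_subtractf)
  have Mb: "specnorm d (M c) \<le> L * ?r" if "c < n" for c
    using lhi[OF that] x xt unfolding lipschitz_hess_def M_def by blast
  have YR: "specnorm d (Y c) \<le> 2 * L * ?r" if c: "c < n" for c
  proof -
    let ?Mb = "\<lambda>i j. (1 / real n) * (\<Sum>c<n. M c) i j"
    have "Y c = M c - ?Mb" unfolding Y_def by (simp add: fun_eq_iff msum_apply)
    then have "specnorm d (Y c) \<le> specnorm d (M c) + specnorm d ?Mb" using specnorm_diff by simp
    also have "specnorm d ?Mb = (1 / real n) * specnorm d (\<Sum>c<n. M c)"
      using specnorm_scale[of d "1 / real n" "\<Sum>c<n. M c"] by simp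
    also have "\<dots> \<le> (1 / real n) * (\<Sum>c<n. specnorm d (M c))"
      by (intro mult_left_mono specnorm_sum) simp
    also have "\<dots> \<le> (1 / real n) * (\<Sum>c<n. L * ?r)"
      by (intro mult_left_mono sum_mono Mb) auto
    also have "\<dots> = L * ?r" using np by simp
    finally show ?thesis using Mb[OF c] by simp
  qed
  have R0: "0 \<le> 2 * L * ?r" using L0 by simp
  have "EB n b (\<lambda>B. specnorm d (calH d (favg n fs) (hB b fs B) x xt - hess d (favg n fs) x) ^ 3)
      = EB n b (\<lambda>B. (1 / real b)^3 * specnorm d (Ssum Y b B) ^ 3)"
    by (intro EB_cong) (simp add: key power_divide)
  also have "\<dots> = (1 / real b)^3 * EB n b (\<lambda>B. specnorm d (Ssum Y b B) ^ 3)" by (rule EB_cmult)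
  also have "\<dots> \<le> (1 / real b)^3 * (2 * sqrt (24 * exp 2 * ln (real d) * real b * (2 * L * ?r)^2) ^ 3)"
  proof -
    have mt: "EB n b (\<lambda>B. specnorm d (Ssum Y b B) ^ 3) \<le> 2 * sqrt (24 * exp 2 * ln (real d) * real b * (2 * L * ?r)^2) ^ 3"
      by (rule mat_third[OF np Y0 _ R0 b d]) (erule YR)
    show ?thesis by (rule mult_left_mono[OF mt]) simp
  qed
  also have "\<dots> = 16 * sqrt (24 * exp 2) ^ 3 * (sqrt (ln (real d)) * L / sqrt (real b)) ^ 3 * ?r ^ 3"
    using d by (intro final_numeric[OF b L0]) auto
  finally show ?thesis .
qed

lemma zero_case:
  fixes fs :: "nat \<Rightarrow> vec \<Rightarrow> real"
  shows "EB n b (\<lambda>B. vnorm d (calG d (favg n fs) (hB b fs B) x x - grad d (favg n fs) x) powr (3/2)) = 0"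
    and "EB n b (\<lambda>B. specnorm d (calH d (favg n fs) (hB b fs B) x x - hess d (favg n fs) x) ^ 3) = 0"
proof -
  have m0: "mv d A (x - x) = (\<lambda>_. 0)" for A
    unfolding mv_def by (simp add: fun_eq_iff)
  have v0: "vnorm d (\<lambda>_. 0) = 0" by (simp add: vnorm_def)
  have "calG d (favg n fs) (hB b fs B) x x - grad d (favg n fs) x = (\<lambda>_. 0)" for B
    unfolding calG_def m0 by (simp add: fun_eq_iff)
  then show "EB n b (\<lambda>B. vnorm d (calG d (favg n fs) (hB b fs B) x x - grad d (favg n fs) x) powr (3/2)) = 0"
    unfolding EB_def using v0 by simp
  have "calH d (favg n fs) (hB b fs B) x x - hess d (favg n fs) x = (\<lambda>_ _. 0)" for B
    unfolding calH_def by (simp add: fun_eq_iff)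
  moreover have "specnorm d (\<lambda>_ _. 0) = 0" by (rule specnorm_zero) (simp add: meq_def)
  ultimately show "EB n b (\<lambda>B. specnorm d (calH d (favg n fs) (hB b fs B) x x - hess d (favg n fs) x) ^ 3) = 0"
    unfolding EB_def by simp
qed

theorem mainTheorem6:
  shows "\<exists>C::real. \<forall>(d::nat) (n::nat) (b::nat) (L::real) (fs :: nat \<Rightarrow> vec \<Rightarrow> real).
    d \<ge> 2 \<and> n \<ge> 1 \<and> b \<ge> 1 \<and>
    (\<forall>i<n. twice_diff d (fs i) \<and> lipschitz_hess d L (fs i)) \<longrightarrow>
    (\<forall>x\<in>Rd d. \<forall>xt\<in>Rd d.
       EB n b (\<lambda>B. vnorm d (calG d (favg n fs) (hB b fs B) x xt - grad d (favg n fs) x) powr (3/2))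
         \<le> (L / sqrt (real b)) powr (3/2) * vnorm d (x - xt) ^ 3
     \<and> EB n b (\<lambda>B. specnorm d (calH d (favg n fs) (hB b fs B) x xt - hess d (favg n fs) x) ^ 3)
         \<le> C * (sqrt (ln (real d)) * L / sqrt (real b)) ^ 3 * vnorm d (x - xt) ^ 3)"
proof (intro exI[of _ "16 * sqrt (24 * exp 2) ^ 3"] allI impI ballI)
  fix d n b :: nat and L :: real and fs :: "nat \<Rightarrow> vec \<Rightarrow> real" and x xt :: vec
  assume h: "d \<ge> 2 \<and> n \<ge> 1 \<and> b \<ge> 1 \<and> (\<forall>i<n. twice_diff d (fs i) \<and> lipschitz_hess d L (fs i))"
    and x: "x \<in> Rd d" and xt: "xt \<in> Rd d"
  then have d: "d \<ge> 2" and n: "n \<ge> 1" and b: "b \<ge> 1"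
    and hyp: "\<forall>i<n. twice_diff d (fs i) \<and> lipschitz_hess d L (fs i)" by auto
  let ?C = "16 * sqrt (24 * exp 2) ^ 3 :: real"
  show "EB n b (\<lambda>B. vnorm d (calG d (favg n fs) (hB b fs B) x xt - grad d (favg n fs) x) powr (3/2))
         \<le> (L / sqrt (real b)) powr (3/2) * vnorm d (x - xt) ^ 3
     \<and> EB n b (\<lambda>B. specnorm d (calH d (favg n fs) (hB b fs B) x xt - hess d (favg n fs) x) ^ 3)
         \<le> ?C * (sqrt (ln (real d)) * L / sqrt (real b)) ^ 3 * vnorm d (x - xt) ^ 3"
  proof (cases "x = xt")
    case True
    have "vnorm d (x - xt) = 0" using True by (simp add: vnorm_def)
    then show ?thesis using zero_case[of n b d fs xt] True by simp
  next
    case False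
    have rpos: "vnorm d (x - xt) > 0"
    proof -
      have "vnorm d (x - xt) \<noteq> 0"
      proof
        assume "vnorm d (x - xt) = 0"
        then have z: "\<forall>j<d. (x - xt) j = 0" by (simp add: vnorm_zero_iff)
        have "x j = xt j" for j
        proof (cases "j < d")
          case True then show ?thesis using z by simp
        next
          case False then show ?thesis using x xt unfolding Rd_def by simp
        qed
        then have "x = xt" by (rule ext)
        then show False using False by simp
      qed
      then show ?thesis using vnorm_nonneg[of d "x - xt"] by linarith
    qed
    have L0: "L \<ge> 0"
    proof -
      have "lipschitz_hess d L (fs 0)" using hyp n by auto
      then have "specnorm d (hess d (fs 0) x - hess d (fs 0) xt) \<le> L * vnorm d (x - xt)"
        using x xt unfolding lipschitz_hess_def by blast
      then have "0 \<le> L * vnorm d (x - xt)" using specnorm_nonneg order_trans by blast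
      then show ?thesis using rpos by (simp add: zero_le_mult_iff)
    qed
    show ?thesis using part1[OF n b hyp x xt L0] part2[OF d n b hyp x xt L0] by simp
  qed
qed

end
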